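(* Let $F$ be a once-punctured torus equipped with a point of the decorated super Teichmüller space $S\tilde T(F)$ with values in the Grassmann algebra $\mathbb{R}_{S[N]}$, with super semi-perimeter $h$. Fix an ideal arc $\mathbf a$ with $\lambda$-length $a$. Let $\{\mathbf b_i\}_{i\in\mathbb Z}$ be the sequence of ideal arcs disjoint from $\mathbf a$, indexed so that $\{\mathbf a,\mathbf b_i,\mathbf b_{i+1}\}$ is an ideal triangulation for every $i$, and let $\mathbf c_i$ be the arc obtained from $\mathbf a$ by flipping it in the triangulation $\{\mathbf a,\mathbf b_i,\mathbf b_{i+1}\}$. Let $b_i,c_i$ be their $\lambda$-lengths. Then, for each $k$, \[ \|s_{2k}(b_i)\|=O(|i|^kR^{|i|})\quad\text{and}\quad \|s_{2k}(c_i)\|=O(|i|^{2k}R^{2|i|})\qquad(|i|\to\infty), \] where $R=\epsilon(r)$ is the body of $r=\tfrac12\big(ah-W_a+\sqrt{(ah-W_a)^2-4}\big)$.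
   Context: $\mathbb{R}_{S[N]}$ is the real Grassmann algebra generated by anticommuting $\beta_{[1]},\dots,\beta_{[N]}$; each $x$ is $\sum_\lambda x_\lambda\beta_{[\lambda]}$, the body $\epsilon(x)$ is the coefficient of $1$, $\|x\|=\sum_\lambda|x_\lambda|$, and $s_{2k}(x)$ is the sum of terms of degree $|\lambda|=2k$ (with $s_0(x)=\epsilon(x)\cdot1$). $S\tilde T(F)$ is the decorated $\mathrm{OSp}(1|2)$ super Teichmüller space (Penner–Zeitlin): a point assigns to each ideal triangulation of $F$ even $\lambda$-lengths with positive body to its three arcs (depending only on the arc), odd $\mu$-invariants to its two triangles, and a spin structure orienting each arc. For an arc $e$, $W_e=\theta_1\theta_2$ with $\theta_1,\theta_2$ the $\mu$-invariants of the triangles adjacent to $e$ counter-clockwise and clockwise of $e$ relative to its spin orientation. Flipping $c$ in a triangulation $\{a,b,c\}$ produces $d$ with $cd=a^2+b^2+abW_c$. The super semi-perimeter is $h=\frac{a}{bc}+\frac{b}{ac}+\frac{c}{ab}+\frac{W_a}{a}+\frac{W_b}{b}+\frac{W_c}{c}$ for any triangulation $\{a,b,c\}$. *)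

theory Defs
  imports Complex_Main "HOL-Library.Landau_Symbols"
begin

text \<open>An element x = sum_lambda x_lambda beta_[lambda] is represented by its coefficient
  function  nat set => real  (lambda ranges over subsets of {1..N}; beta_[lambda] is the
  product of the generators with indices in lambda taken in increasing order).\<close>

type_synonym grass = "nat set \<Rightarrow> real"

definition RS :: "nat \<Rightarrow> grass set" where
  "RS N = {x. \<forall>l. x l \<noteq> 0 \<longrightarrow> l \<subseteq> {1..N}}"

text \<open>Sign of beta_[mu] * beta_[nu] = gsign mu nu * beta_[mu Un nu] (0 if they overlap).\<close>
definition gsign :: "nat set \<Rightarrow> nat set \<Rightarrow> real" where
  "gsign m n = (if m \<inter> n = {} then (-1) ^ card {(i, j). i \<in> m \<and> j \<in> n \<and> j < i} else 0)"

definition gmul :: "grass \<Rightarrow> grass \<Rightarrow> grass" where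
  "gmul x y = (\<lambda>l. \<Sum>m\<in>Pow l. gsign m (l - m) * x m * y (l - m))"

definition gadd :: "grass \<Rightarrow> grass \<Rightarrow> grass" where
  "gadd x y = (\<lambda>l. x l + y l)"

definition gscale :: "real \<Rightarrow> grass \<Rightarrow> grass" where
  "gscale c x = (\<lambda>l. c * x l)"

definition gsub :: "grass \<Rightarrow> grass \<Rightarrow> grass" where
  "gsub x y = (\<lambda>l. x l - y l)"

definition gconst :: "real \<Rightarrow> grass" where
  "gconst c = (\<lambda>l. if l = {} then c else 0)"

definition body :: "grass \<Rightarrow> real" where
  "body x = x {}"

definition soul :: "grass \<Rightarrow> grass" where
  "soul x = gsub x (gconst (body x))"

primrec gpow :: "grass \<Rightarrow> nat \<Rightarrow> grass" where
  "gpow x 0 = gconst 1"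
| "gpow x (Suc n) = gmul x (gpow x n)"

definition gnorm :: "nat \<Rightarrow> grass \<Rightarrow> real" where
  "gnorm N x = (\<Sum>l\<in>Pow {1..N}. \<bar>x l\<bar>)"

definition s2k :: "nat \<Rightarrow> grass \<Rightarrow> grass" where
  "s2k k x = (\<lambda>l. if finite l \<and> card l = 2 * k then x l else 0)"

definition geven :: "nat \<Rightarrow> grass \<Rightarrow> bool" where
  "geven N x \<longleftrightarrow> x \<in> RS N \<and> (\<forall>l. x l \<noteq> 0 \<longrightarrow> even (card l))"

definition godd :: "nat \<Rightarrow> grass \<Rightarrow> bool" where
  "godd N x \<longleftrightarrow> x \<in> RS N \<and> (\<forall>l. x l \<noteq> 0 \<longrightarrow> odd (card l))"

text \<open>Inverse of an element with nonzero body (the soul is nilpotent: its (N+1)-st power vanishes).\<close>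
definition ginv :: "nat \<Rightarrow> grass \<Rightarrow> grass" where
  "ginv N x = (\<lambda>l. (1 / body x) * (\<Sum>j\<le>N. gpow (gscale (- 1 / body x) (soul x)) j l))"

definition gdiv :: "nat \<Rightarrow> grass \<Rightarrow> grass \<Rightarrow> grass" where
  "gdiv N x y = gmul x (ginv N y)"

definition gsqrt :: "nat \<Rightarrow> grass \<Rightarrow> grass" where
  "gsqrt N x = (\<lambda>l. sqrt (body x) *
      (\<Sum>j\<le>N. ((1/2 :: real) gchoose j) * gpow (gscale (1 / body x) (soul x)) j l))"

text \<open>In a triangulation the two triangles carry odd mu-invariants mu True, mu False.
  For an arc e, the boolean ccw says whether the triangle "True" is the one counter-clockwise of e
  relative to its spin orientation; then W_e = theta_ccw * theta_cw.\<close>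
definition Wof :: "(bool \<Rightarrow> grass) \<Rightarrow> bool \<Rightarrow> grass" where
  "Wof mu ccw = (if ccw then gmul (mu True) (mu False) else gmul (mu False) (mu True))"

text \<open>Right-hand side of the flip relation: flipping c in {a,b,c} gives d with
  c d = a^2 + b^2 + a b W_c.\<close>
definition flip_rhs :: "grass \<Rightarrow> grass \<Rightarrow> grass \<Rightarrow> grass" where
  "flip_rhs a b Wc = gadd (gadd (gmul a a) (gmul b b)) (gmul (gmul a b) Wc)"

definition semiper :: "nat \<Rightarrow> grass \<Rightarrow> grass \<Rightarrow> grass \<Rightarrow> grass \<Rightarrow> grass \<Rightarrow> grass \<Rightarrow> grass" where
  "semiper N a b c Wa Wb Wc =
     gadd (gadd (gadd (gdiv N a (gmul b c)) (gdiv N b (gmul a c))) (gdiv N c (gmul a b)))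
          (gadd (gadd (gdiv N Wa a) (gdiv N Wb b)) (gdiv N Wc c))"

end

theory Submission
  imports Defs
begin


lemma cancel_unit:
  fixes b :: "'a::comm_ring_1"
  assumes "b * z = 1" "b * x = b * y" shows "x = y"
proof -
  have "x = (b * z) * x" using assms(1) by simp
  also have "\<dots> = z * (b * x)" by (simp add: mult_ac)
  also have "\<dots> = z * (b * y)" using assms(2) by simp
  also have "\<dots> = (b * z) * y" by (simp add: mult_ac)
  finally show ?thesis using assms(1) by simp
qed

lemma h_expand:
  fixes a bi bj Wa U V H I1 I2 I3 I4 I5 I6 :: "'a::comm_ring_1"
  assumes H: "H = a*I1 + bi*I2 + bj*I3 + (Wa*I4 + U*I5 + V*I6)"
    and i1: "(bi*bj)*I1 = 1" and i2: "(a*bj)*I2 = 1" and i3: "(a*bi)*I3 = 1"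
    and i4: "a*I4 = 1" and i5: "bi*I5 = 1" and i6: "bj*I6 = 1"
  shows "H*(a*(bi*bj)) = a*a + bi*bi + bj*bj + Wa*(bi*bj) + U*(a*bj) + V*(a*bi)"
proof -
  have t1: "a*I1*(a*(bi*bj)) = a*a" using i1 by (metis mult.commute mult.left_commute mult_1_right)
  have t2: "bi*I2*(a*(bi*bj)) = bi*bi"
  proof -
    have "bi*I2*(a*(bi*bj)) = (bi*bi)*((a*bj)*I2)" by (simp add: mult_ac)
    then show ?thesis using i2 by simp
  qed
  have t3: "bj*I3*(a*(bi*bj)) = bj*bj"
  proof -
    have "bj*I3*(a*(bi*bj)) = (bj*bj)*((a*bi)*I3)" by (simp add: mult_ac)
    then show ?thesis using i3 by simp
  qed
  have t4: "Wa*I4*(a*(bi*bj)) = Wa*(bi*bj)"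
  proof -
    have "Wa*I4*(a*(bi*bj)) = (Wa*(bi*bj))*(a*I4)" by (simp add: mult_ac)
    then show ?thesis using i4 by simp
  qed
  have t5: "U*I5*(a*(bi*bj)) = U*(a*bj)"
  proof -
    have "U*I5*(a*(bi*bj)) = (U*(a*bj))*(bi*I5)" by (simp add: mult_ac)
    then show ?thesis using i5 by simp
  qed
  have t6: "V*I6*(a*(bi*bj)) = V*(a*bi)"
  proof -
    have "V*I6*(a*(bi*bj)) = (V*(a*bi))*(bj*I6)" by (simp add: mult_ac)
    then show ?thesis using i6 by simp
  qed
  show ?thesis unfolding H distrib_right t1 t2 t3 t4 t5 t6 by (simp add: add.assoc)
qed

lemma rec_abstract:
  fixes a h Wa :: "'a::comm_ring_1" and b U V :: "int \<Rightarrow> 'a"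
  assumes fn: "\<And>i. b (i+1) * b (i-1) = a*a + b i * b i + a * b i * V i"
    and fp: "\<And>i. b i * b (i+2) = a*a + b (i+1) * b (i+1) + a * b (i+1) * U i"
    and hh: "\<And>i. h*(a*(b i * b (i+1))) = a*a + b i * b i + b (i+1) * b (i+1) + Wa*(b i * b (i+1)) + U i*(a*b (i+1)) + V i*(a*b i)"
    and bu: "\<And>i. \<exists>z. b i * z = 1"
  shows "b (i+1) + b (i-1) = (a*h - Wa) * b i - a * U i" "a * U (i+2) = a * U i"
proof -
  have E1: "b (j+1) + b (j-1) + Wa * b j + a * U j = a*h*b j" for j
  proof -
    obtain z where z: "b (j+1) * z = 1" using bu by blast
    have "b (j+1) * (b (j+1) + b (j-1) + Wa * b j + a * U j)
        = b (j+1) * b (j-1) + (b (j+1) * b (j+1) + Wa*(b j * b (j+1)) + U j*(a*b (j+1)))"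
      by (simp add: algebra_simps)
    also have "\<dots> = (a*a + b j * b j + a * b j * V j) + (b (j+1) * b (j+1) + Wa*(b j * b (j+1)) + U j*(a*b (j+1)))"
      by (simp only: fn)
    also have "\<dots> = a*a + b j * b j + b (j+1) * b (j+1) + Wa*(b j * b (j+1)) + U j*(a*b (j+1)) + V j*(a*b j)"
      by (simp add: algebra_simps)
    also have "\<dots> = h*(a*(b j * b (j+1)))" by (simp only: hh)
    also have "\<dots> = b (j+1) * (a*h*b j)" by (simp add: mult_ac)
    finally have "b (j+1) * (b (j+1) + b (j-1) + Wa * b j + a * U j) = b (j+1) * (a*h*b j)" .
    then show ?thesis using cancel_unit[OF z] by blast
  qed
  have E2: "b (j+2) + b j + Wa * b (j+1) + a * V j = a*h*b (j+1)" for j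
  proof -
    obtain z where z: "b j * z = 1" using bu by blast
    have "b j * (b (j+2) + b j + Wa * b (j+1) + a * V j)
        = b j * b (j+2) + (b j * b j + Wa*(b j * b (j+1)) + V j*(a*b j))"
      by (simp add: algebra_simps)
    also have "\<dots> = (a*a + b (j+1) * b (j+1) + a * b (j+1) * U j) + (b j * b j + Wa*(b j * b (j+1)) + V j*(a*b j))"
      by (simp only: fp)
    also have "\<dots> = a*a + b j * b j + b (j+1) * b (j+1) + Wa*(b j * b (j+1)) + U j*(a*b (j+1)) + V j*(a*b j)"
      by (simp add: algebra_simps)
    also have "\<dots> = h*(a*(b j * b (j+1)))" by (simp only: hh)
    also have "\<dots> = b j * (a*h*b (j+1))" by (simp add: mult_ac)
    finally have "b j * (b (j+2) + b j + Wa * b (j+1) + a * V j) = b j * (a*h*b (j+1))" .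
    then show ?thesis using cancel_unit[OF z] by blast
  qed
  have UV: "a * U (j+1) = a * V j" for j
  proof -
    have "b (j+2) + b j + Wa * b (j+1) + a * U (j+1) = a*h*b (j+1)" using E1[of "j+1"] by (simp add: add.assoc)
    then show ?thesis using E2[of j] by (metis add_left_cancel)
  qed
  have VU: "a * V (j+1) = a * U j" for j
  proof -
    obtain z where z: "b (j+1) * z = 1" using bu by blast
    have "b (j+2) * b j = a*a + b (j+1) * b (j+1) + a * b (j+1) * V (j+1)" using fn[of "j+1"] by (simp add: add.assoc)
    moreover have "b j * b (j+2) = a*a + b (j+1) * b (j+1) + a * b (j+1) * U j" by (rule fp)
    ultimately have "a * b (j+1) * V (j+1) = a * b (j+1) * U j" by (simp add: mult.commute)
    then have "b (j+1) * (a * V (j+1)) = b (j+1) * (a * U j)" by (simp add: mult_ac)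
    then show ?thesis using cancel_unit[OF z] by blast
  qed
  show "b (i+1) + b (i-1) = (a*h - Wa) * b i - a * U i"
    using E1[of i] by (simp add: algebra_simps eq_diff_eq)
  have "a * U (i+2) = a * V (i+1)" using UV[of "i+1"] by (simp add: add.assoc)
  also have "\<dots> = a * U i" by (rule VU)
  finally show "a * U (i+2) = a * U i" .
qed



lemma rec_nat:
  fixes y f v :: "nat \<Rightarrow> real" and R x0 K :: real
  assumes R: "R > 1" and x0: "R*R - x0*R + 1 = 0"
    and rec: "\<And>n. y (n+2) - x0 * y (n+1) + y n = f (n+1)"
    and v1: "\<And>n. v n \<ge> 1" and vm: "\<And>n. v n \<le> v (Suc n)"
    and S: "\<And>n. (\<Sum>j\<in>{1..n}. \<bar>f j\<bar> / R^j) \<le> K * v n"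
  shows "\<exists>D. \<forall>n. \<bar>y n\<bar> \<le> D * v n * R^n"
proof -
  define \<rho> where "\<rho> = 1 / R"
  have Rpos: "R > 0" using R by simp
  have Rr: "R * \<rho> = 1" using Rpos by (simp add: \<rho>_def)
  have rpos: "\<rho> > 0" using Rpos by (simp add: \<rho>_def)
  have x0e: "x0 = R + \<rho>"
  proof -
    have "x0 * R = R * R + 1" using x0 by simp
    then show ?thesis using Rpos by (simp add: \<rho>_def field_simps)
  qed
  have "1 < R * R" using R by (metis less_1_mult)
  then have Rgr: "R - \<rho> > 0" using R Rpos by (simp add: \<rho>_def field_simps)
  define z where "z n = y (n+1) - \<rho> * y n" for n
  have zrec: "z (Suc n) = R * z n + f (n+1)" for n
  proof -
    have "y (n+2) = x0 * y (n+1) - y n + f (n+1)" using rec[of n] by simp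
    then have "z (Suc n) = (x0 - \<rho>) * y (n+1) - y n + f (n+1)"
      by (simp add: z_def algebra_simps numeral_2_eq_2)
    also have "\<dots> = R * z n + f (n+1)"
      by (simp add: z_def x0e algebra_simps Rr[unfolded mult.commute[of R]] )
        (simp add: mult.assoc[symmetric] Rr)
    finally show ?thesis .
  qed
  define Sm where "Sm n = (\<Sum>j\<in>{1..n}. \<bar>f j\<bar> / R^j)" for n
  have Sm_Suc: "Sm (Suc n) = Sm n + \<bar>f (Suc n)\<bar> / R^(Suc n)" for n
    by (simp add: Sm_def)
  have Sm0: "Sm n \<ge> 0" for n unfolding Sm_def using Rpos by (intro sum_nonneg) auto
  have zb: "\<bar>z n\<bar> \<le> R^n * (\<bar>z 0\<bar> + Sm n)" for n
  proof (induction n)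
    case 0 then show ?case by (simp add: Sm_def)
  next
    case (Suc n)
    have "\<bar>z (Suc n)\<bar> = \<bar>R * z n + f (Suc n)\<bar>" using zrec[of n] by simp
    also have "\<dots> \<le> \<bar>R * z n\<bar> + \<bar>f (Suc n)\<bar>" by (rule abs_triangle_ineq)
    also have "\<bar>R * z n\<bar> + \<bar>f (Suc n)\<bar> = R * \<bar>z n\<bar> + \<bar>f (Suc n)\<bar>" using Rpos by (simp add: abs_mult)
    also have "\<dots> \<le> R * (R^n * (\<bar>z 0\<bar> + Sm n)) + \<bar>f (Suc n)\<bar>"
      using Suc.IH Rpos by simp
    also have "\<dots> = R^(Suc n) * (\<bar>z 0\<bar> + Sm (Suc n))"
      using Rpos by (simp add: Sm_Suc field_simps)
    finally show ?case .
  qed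
  have K0: "K \<ge> 0"
  proof -
    have "0 \<le> K * v 0" using S[of 0] by simp
    then show ?thesis using v1[of 0] by (simp add: zero_le_mult_iff)
  qed
  define E where "E = \<bar>z 0\<bar> + K"
  have E0: "E \<ge> 0" using K0 by (simp add: E_def)
  have zb2: "\<bar>z n\<bar> \<le> E * v n * R^n" for n
  proof -
    have "\<bar>z 0\<bar> * 1 \<le> \<bar>z 0\<bar> * v n" using v1[of n] by (intro mult_left_mono) auto
    then have "\<bar>z 0\<bar> + Sm n \<le> \<bar>z 0\<bar> * v n + K * v n"
      using S[of n] unfolding Sm_def by linarith
    also have "\<dots> = E * v n" by (simp add: E_def algebra_simps)
    finally have "\<bar>z 0\<bar> + Sm n \<le> E * v n" .
    then have "R^n * (\<bar>z 0\<bar> + Sm n) \<le> R^n * (E * v n)"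
      using Rpos by (intro mult_left_mono) auto
    then show ?thesis using zb[of n] by (simp add: mult_ac)
  qed
  define D where "D = max \<bar>y 0\<bar> (E / (R - \<rho>))"
  have D0: "D \<ge> 0" by (simp add: D_def)
  have DE: "\<rho> * D + E \<le> R * D"
  proof -
    have "E / (R - \<rho>) \<le> D" by (simp add: D_def)
    then have "E \<le> D * (R - \<rho>)" using Rgr by (simp add: pos_divide_le_eq)
    then show ?thesis by (simp add: algebra_simps)
  qed
  have "\<bar>y n\<bar> \<le> D * v n * R^n" for n
  proof (induction n)
    case 0
    have "\<bar>y 0\<bar> \<le> D" by (simp add: D_def)
    also have "D * 1 \<le> D * v 0" using v1[of 0] D0 by (intro mult_left_mono) auto
    finally show ?case by simp
  next
    case (Suc n)
    have vR: "v n * R^n \<ge> 0" using v1[of n] Rpos by simp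
    have "y (Suc n) = \<rho> * y n + z n" by (simp add: z_def)
    then have "\<bar>y (Suc n)\<bar> \<le> \<bar>\<rho> * y n\<bar> + \<bar>z n\<bar>" by (simp add: abs_triangle_ineq)
    also have "\<bar>\<rho> * y n\<bar> + \<bar>z n\<bar> = \<rho> * \<bar>y n\<bar> + \<bar>z n\<bar>" using rpos by (simp add: abs_mult)
    also have "\<dots> \<le> \<rho> * (D * v n * R^n) + E * v n * R^n"
      using Suc.IH zb2[of n] rpos by (intro add_mono mult_left_mono) auto
    also have "\<dots> = (\<rho> * D + E) * (v n * R^n)" by (simp add: algebra_simps)
    also have "\<dots> \<le> (R * D) * (v n * R^n)" using DE vR by (intro mult_right_mono) auto
    also have "\<dots> \<le> (R * D) * (v (Suc n) * R^n)"
      using vm[of n] Rpos D0 by (intro mult_left_mono mult_right_mono) auto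
    also have "\<dots> = D * v (Suc n) * R^(Suc n)" by (simp add: mult_ac)
    finally show ?case .
  qed
  then show ?thesis by blast
qed



lemma rec_int:
  fixes y f :: "int \<Rightarrow> real" and v :: "nat \<Rightarrow> real" and R x0 K :: real
  assumes R: "R > 1" and x0: "R*R - x0*R + 1 = 0"
    and rec: "\<And>i. y (i+1) - x0 * y i + y (i-1) = f i"
    and v1: "\<And>n. v n \<ge> 1" and vm: "\<And>n. v n \<le> v (Suc n)"
    and Sp: "\<And>n. (\<Sum>j\<in>{1..n}. \<bar>f (int j)\<bar> / R^j) \<le> K * v n"
    and Sn: "\<And>n. (\<Sum>j\<in>{1..n}. \<bar>f (- int j)\<bar> / R^j) \<le> K * v n"
  shows "\<exists>D. \<forall>i. \<bar>y i\<bar> \<le> D * v (nat \<bar>i\<bar>) * R^(nat \<bar>i\<bar>)"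
proof -
  have r1: "y (int (n+2)) - x0 * y (int (n+1)) + y (int n) = f (int (n+1))" for n
    using rec[of "int n + 1"] by (simp add: add.commute)
  obtain D1 where D1: "\<And>n. \<bar>y (int n)\<bar> \<le> D1 * v n * R^n"
    using rec_nat[of R x0 "\<lambda>n. y (int n)" "\<lambda>n. f (int n)" v K, OF R x0 r1 v1 vm Sp] by blast
  have r2: "y (- int (n+2)) - x0 * y (- int (n+1)) + y (- int n) = f (- int (n+1))" for n
  proof -
    have F: "y (- int n - 1 + 1) - x0 * y (- int n - 1) + y (- int n - 1 - 1) = f (- int n - 1)" by (rule rec)
    have e1: "- int (n+2) = - int n - 1 - 1" and e2: "- int (n+1) = - int n - 1" and e3: "- int n - 1 + 1 = - int n"
      by simp_all
    show ?thesis using F by (simp only: e1 e2 e3)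
  qed
  obtain D2 where D2: "\<And>n. \<bar>y (- int n)\<bar> \<le> D2 * v n * R^n"
    using rec_nat[of R x0 "\<lambda>n. y (- int n)" "\<lambda>n. f (- int n)" v K, OF R x0 r2 v1 vm Sn] by blast
  have "\<bar>y i\<bar> \<le> max D1 D2 * v (nat \<bar>i\<bar>) * R^(nat \<bar>i\<bar>)" for i
  proof -
    have "v (nat \<bar>i\<bar>) \<ge> 0" using v1[of "nat \<bar>i\<bar>"] by linarith
    then have vR: "v (nat \<bar>i\<bar>) * R^(nat \<bar>i\<bar>) \<ge> 0" using R by (intro mult_nonneg_nonneg) auto
    show ?thesis
    proof (cases "i \<ge> 0")
      case True
      define n where "n = nat i"
      have i: "i = int n" using True by (simp add: n_def)
      have "\<bar>y i\<bar> \<le> D1 * (v n * R^n)" using D1[of n] i by (simp add: mult.assoc)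
      also have "\<dots> \<le> max D1 D2 * (v n * R^n)" using vR i by (intro mult_right_mono) auto
      finally show ?thesis using i by (simp add: mult.assoc)
    next
      case False
      define n where "n = nat (- i)"
      have i: "i = - int n" using False by (simp add: n_def)
      have "\<bar>y i\<bar> \<le> D2 * (v n * R^n)" using D2[of n] i by (simp add: mult.assoc)
      also have "\<dots> \<le> max D1 D2 * (v n * R^n)" using vR i by (intro mult_right_mono) auto
      finally show ?thesis using i by (simp add: mult.assoc)
    qed
  qed
  then show ?thesis by blast
qed

lemma geo_sum: fixes R :: real shows "R > 1 \<Longrightarrow> (\<Sum>j\<in>{1..n}. 1 / R^j) = (1 - 1 / R^n) / (R - 1)"
proof (induction n)
  case 0 then show ?case by auto
next
  case (Suc n)
  have "(\<Sum>j\<in>{1..Suc n}. 1 / R^j) = (1 - 1 / R^n) / (R - 1) + 1 / R^(Suc n)"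
    using Suc by simp
  also have "\<dots> = (1 - 1 / R^(Suc n)) / (R - 1)"
    using Suc.prems by (simp add: field_simps)
  finally show ?case .
qed

lemma geo_bound: fixes R :: real assumes R: "R > 1" shows "(\<Sum>j\<in>{1..n}. 1 / R^j) \<le> 1 / (R - 1)"
proof -
  have "1 - 1 / R^n \<le> 1" using R by simp
  then have "(1 - 1 / R^n) / (R - 1) \<le> 1 / (R - 1)" using R by (intro divide_right_mono) auto
  then show ?thesis using geo_sum[OF R] by simp
qed

lemma rec_cor0:
  fixes y f :: "int \<Rightarrow> real" and R x0 C :: real
  assumes R: "R > 1" and x0: "R*R - x0*R + 1 = 0"
    and rec: "\<And>i. y (i+1) - x0 * y i + y (i-1) = f i"
    and fb: "\<And>i. \<bar>f i\<bar> \<le> C"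
  shows "\<exists>D. \<forall>i. \<bar>y i\<bar> \<le> D * R^(nat \<bar>i\<bar>)"
proof -
  have C0: "C \<ge> 0" using fb[of 0] by simp
  have S: "(\<Sum>j\<in>{1..n}. \<bar>f (g j)\<bar> / R^j) \<le> C / (R - 1) * 1" for n and g :: "nat \<Rightarrow> int"
  proof -
    have "(\<Sum>j\<in>{1..n}. \<bar>f (g j)\<bar> / R^j) \<le> (\<Sum>j\<in>{1..n}. C * (1 / R^j))"
      using fb R by (intro sum_mono) (simp add: divide_right_mono)
    also have "\<dots> = C * (\<Sum>j\<in>{1..n}. 1 / R^j)" by (simp add: sum_distrib_left)
    also have "\<dots> \<le> C * (1 / (R - 1))" by (rule mult_left_mono[OF geo_bound[OF R] C0])
    finally show ?thesis by simp
  qed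
  obtain D where "\<forall>i. \<bar>y i\<bar> \<le> D * 1 * R^(nat \<bar>i\<bar>)"
    using rec_int[of R x0 y f "\<lambda>_. 1" "C / (R - 1)", OF R x0 rec _ _ S S] by auto
  then show ?thesis by auto
qed

lemma rec_cork:
  fixes y f :: "int \<Rightarrow> real" and R x0 C :: real
  assumes R: "R > 1" and x0: "R*R - x0*R + 1 = 0"
    and rec: "\<And>i. y (i+1) - x0 * y i + y (i-1) = f i"
    and fb: "\<And>i. \<bar>f i\<bar> \<le> C * (real (nat \<bar>i\<bar>) + 1)^k * R^(nat \<bar>i\<bar>)"
  shows "\<exists>D. \<forall>i. \<bar>y i\<bar> \<le> D * (real (nat \<bar>i\<bar>) + 1)^(k+1) * R^(nat \<bar>i\<bar>)"
proof -
  have C0: "C \<ge> 0" using fb[of 0] by simp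
  have Rp: "R > 0" using R by simp
  have S: "(\<Sum>j\<in>{1..n}. \<bar>f (g j)\<bar> / R^j) \<le> C * (real n + 1)^(k+1)"
    if g: "\<And>j. nat \<bar>g j\<bar> = j" for n and g :: "nat \<Rightarrow> int"
  proof -
    have "(\<Sum>j\<in>{1..n}. \<bar>f (g j)\<bar> / R^j) \<le> (\<Sum>j\<in>{1..n}. C * (real n + 1)^k)"
    proof (intro sum_mono)
      fix j assume j: "j \<in> {1..n}"
      have "\<bar>f (g j)\<bar> / R^j \<le> C * (real j + 1)^k * R^j / R^j"
        using fb[of "g j"] g[of j] Rp by (intro divide_right_mono) auto
      also have "\<dots> = C * (real j + 1)^k" using Rp by simp
      also have "\<dots> \<le> C * (real n + 1)^k" using j C0 by (intro mult_left_mono power_mono) auto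
      finally show "\<bar>f (g j)\<bar> / R^j \<le> C * (real n + 1)^k" .
    qed
    also have "\<dots> = real n * (C * (real n + 1)^k)" by simp
    also have "\<dots> \<le> (real n + 1) * (C * (real n + 1)^k)" using C0 by (intro mult_right_mono) auto
    also have "\<dots> = C * (real n + 1)^(k+1)" by (simp add: algebra_simps)
    finally show ?thesis .
  qed
  have Sp: "(\<Sum>j\<in>{1..n}. \<bar>f (int j)\<bar> / R^j) \<le> C * (real n + 1)^(k+1)" for n using S[of "\<lambda>j. int j"] by simp
  have Sn: "(\<Sum>j\<in>{1..n}. \<bar>f (- int j)\<bar> / R^j) \<le> C * (real n + 1)^(k+1)" for n using S[of "\<lambda>j. - int j"] by simp
  have v1: "(real n + 1)^(k+1) \<ge> 1" for n by (rule one_le_power) simp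
  have vm: "(real n + 1)^(k+1) \<le> (real (Suc n) + 1)^(k+1)" for n by (rule power_mono) auto
  show ?thesis
    using rec_int[of R x0 y f "\<lambda>n. (real n + 1)^(k+1)" C, OF R x0 rec v1 vm Sp Sn] by auto
qed



definition ginvc :: "nat set \<Rightarrow> nat set \<Rightarrow> nat" where
  "ginvc m n = card {(i, j). i \<in> m \<and> j \<in> n \<and> j < i}"

lemma gsign_alt: "m \<inter> n = {} \<Longrightarrow> gsign m n = (-1) ^ ginvc m n"
  by (simp add: gsign_def ginvc_def)

lemma ginvc_fin: "finite m \<Longrightarrow> finite n \<Longrightarrow> finite {(i, j). i \<in> m \<and> j \<in> n \<and> j < i}"
  by (rule finite_subset[of _ "m \<times> n"]) auto

lemma ginvc_union_left:
  assumes "finite m" "finite n" "finite p" "m \<inter> n = {}"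
  shows "ginvc (m \<union> n) p = ginvc m p + ginvc n p"
proof -
  have "{(i, j). i \<in> m \<union> n \<and> j \<in> p \<and> j < i} =
        {(i, j). i \<in> m \<and> j \<in> p \<and> j < i} \<union> {(i, j). i \<in> n \<and> j \<in> p \<and> j < i}" by auto
  moreover have "{(i, j). i \<in> m \<and> j \<in> p \<and> j < i} \<inter> {(i, j). i \<in> n \<and> j \<in> p \<and> j < i} = {}"
    using assms(4) by auto
  ultimately show ?thesis unfolding ginvc_def
    by (simp add: card_Un_disjoint ginvc_fin assms)
qed

lemma ginvc_union_right:
  assumes "finite m" "finite n" "finite p" "n \<inter> p = {}"
  shows "ginvc m (n \<union> p) = ginvc m n + ginvc m p"
proof -
  have "{(i, j). i \<in> m \<and> j \<in> n \<union> p \<and> j < i} =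
        {(i, j). i \<in> m \<and> j \<in> n \<and> j < i} \<union> {(i, j). i \<in> m \<and> j \<in> p \<and> j < i}" by auto
  moreover have "{(i, j). i \<in> m \<and> j \<in> n \<and> j < i} \<inter> {(i, j). i \<in> m \<and> j \<in> p \<and> j < i} = {}"
    using assms(4) by auto
  ultimately show ?thesis unfolding ginvc_def
    by (simp add: card_Un_disjoint ginvc_fin assms)
qed

lemma gsign_cocycle:
  assumes "finite p" "finite q" "finite r" "p \<inter> q = {}" "p \<inter> r = {}" "q \<inter> r = {}"
  shows "gsign p q * gsign (p \<union> q) r = gsign p (q \<union> r) * gsign q r"
proof -
  have "gsign p q * gsign (p \<union> q) r = (-1) ^ (ginvc p q + (ginvc p r + ginvc q r))"
    using assms by (simp add: gsign_alt ginvc_union_left Int_Un_distrib2 power_add)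
  also have "\<dots> = gsign p (q \<union> r) * gsign q r"
    using assms by (simp add: gsign_alt ginvc_union_right Int_Un_distrib power_add)
  finally show ?thesis .
qed

lemma gsign_empty1[simp]: "gsign {} l = 1" by (simp add: gsign_def)
lemma gsign_empty2[simp]: "gsign l {} = 1" by (simp add: gsign_def)

lemma ginvc_swap:
  assumes "finite m" "finite n" "m \<inter> n = {}"
  shows "ginvc m n + ginvc n m = card m * card n"
proof -
  let ?A = "{(i, j). i \<in> m \<and> j \<in> n \<and> j < i}"
  let ?B = "{(i, j). i \<in> m \<and> j \<in> n \<and> i < j}"
  let ?C = "{(i, j). i \<in> n \<and> j \<in> m \<and> j < i}"
  have im: "?B = (\<lambda>(i,j). (j,i)) ` ?C" by (auto simp: image_def)
  have inj: "inj_on (\<lambda>(i::nat,j::nat). (j,i)) ?C" by (auto simp: inj_on_def)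
  have e: "ginvc n m = card ?B"
    unfolding ginvc_def im card_image[OF inj] ..
  have u: "?A \<union> ?B = m \<times> n"
    using assms(3) by (auto simp: linorder_neq_iff)
  have d: "?A \<inter> ?B = {}" by auto
  have fA: "finite ?A" by (rule ginvc_fin) (use assms in auto)
  have fB: "finite ?B"
    by (rule finite_subset[of _ "m \<times> n"]) (auto simp: assms)
  have "card (?A \<union> ?B) = card ?A + card ?B" by (rule card_Un_disjoint[OF fA fB d])
  then have "card (m \<times> n) = ginvc m n + ginvc n m"
    unfolding e u by (simp add: ginvc_def)
  then show ?thesis by (simp add: card_cartesian_product)
qed

lemma gsign_swap_even:
  assumes "finite m" "finite n" "even (card m)"
  shows "gsign n m = gsign m n"
proof (cases "m \<inter> n = {}")
  case True
  have "even (ginvc m n + ginvc n m)" using ginvc_swap[OF assms(1,2) True] assms(3) by simp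
  then have "(-1::real) ^ ginvc n m = (-1) ^ ginvc m n"
    by (metis even_add neg_one_even_power neg_one_odd_power)
  then show ?thesis using True by (simp add: gsign_alt Int_commute)
next
  case False
  then show ?thesis by (simp add: gsign_def Int_commute)
qed

lemma gmul_assoc: "gmul (gmul x y) z = gmul x (gmul y z)"
proof (rule ext)
  fix l
  show "gmul (gmul x y) z l = gmul x (gmul y z) l"
  proof (cases "finite l")
    case False
    then show ?thesis by (simp add: gmul_def)
  next
    case fin: True
    have "gmul (gmul x y) z l = (\<Sum>m\<in>Pow l. \<Sum>p\<in>Pow m. gsign p (m - p) * gsign m (l - m) * x p * y (m - p) * z (l - m))"
      unfolding gmul_def by (simp add: sum_distrib_left sum_distrib_right mult_ac)
    also have "\<dots> = (\<Sum>(m,p)\<in>Sigma (Pow l) Pow. gsign p (m - p) * gsign m (l - m) * x p * y (m - p) * z (l - m))"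
      by (rule sum.Sigma) (auto intro: finite_subset[OF _ fin])
    also have "\<dots> = (\<Sum>(p,q)\<in>Sigma (Pow l) (\<lambda>p. Pow (l - p)). gsign p (l - p) * gsign q (l - p - q) * x p * y q * z (l - p - q))"
    proof (rule sum.reindex_bij_witness[where i = "\<lambda>(p,q). (p \<union> q, p)" and j = "\<lambda>(m,p). (p, m - p)"])
      fix a assume "a \<in> Sigma (Pow l) Pow"
      then obtain m p where a: "a = (m, p)" "m \<subseteq> l" "p \<subseteq> m" by auto
      have fp: "finite p" "finite (m - p)" "finite (l - m)" using a fin by (auto intro: finite_subset)
      have "gsign p (m - p) * gsign (p \<union> (m - p)) (l - m) = gsign p ((m - p) \<union> (l - m)) * gsign (m - p) (l - m)"
        by (rule gsign_cocycle) (use a fp in auto)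
      moreover have "(m - p) \<union> (l - m) = l - p" "p \<union> (m - p) = m" "l - p - (m - p) = l - m" using a by auto
      ultimately have sg: "gsign p (m - p) * gsign m (l - m) = gsign p (l - p) * gsign (m - p) (l - m)" by simp
      have e3: "l - p - (m - p) = l - m" using a by auto
      show "(case case a of (m, p) \<Rightarrow> (p, m - p) of (p, q) \<Rightarrow> gsign p (l - p) * gsign q (l - p - q) * x p * y q * z (l - p - q)) =
         (case a of (m, p) \<Rightarrow> gsign p (m - p) * gsign m (l - m) * x p * y (m - p) * z (l - m))"
        unfolding a(1) using sg by (simp only: prod.case e3)
    qed auto
    also have "\<dots> = (\<Sum>p\<in>Pow l. \<Sum>q\<in>Pow (l - p). gsign p (l - p) * gsign q (l - p - q) * x p * y q * z (l - p - q))"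
      by (rule sum.Sigma[symmetric]) (auto intro: finite_subset[OF _ fin])
    also have "\<dots> = gmul x (gmul y z) l"
      unfolding gmul_def by (simp add: sum_distrib_left sum_distrib_right mult_ac)
    finally show ?thesis .
  qed
qed



lemma gmul_nonzero:
  assumes "gmul x y l \<noteq> 0"
  shows "finite l \<and> (\<exists>m\<subseteq>l. x m \<noteq> 0 \<and> y (l - m) \<noteq> 0)"
proof -
  have fin: "finite l"
  proof (rule ccontr)
    assume "\<not> finite l"
    then have "infinite (Pow l)" by simp
    then show False using assms by (simp add: gmul_def)
  qed
  have "\<exists>m\<in>Pow l. gsign m (l - m) * x m * y (l - m) \<noteq> 0"
  proof (rule ccontr)
    assume "\<not> ?thesis"
    then have "gmul x y l = 0" unfolding gmul_def by (intro sum.neutral) auto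
    then show False using assms by simp
  qed
  then show ?thesis using fin by auto
qed

lemma gmul_RS: "x \<in> RS N \<Longrightarrow> y \<in> RS N \<Longrightarrow> gmul x y \<in> RS N"
  unfolding RS_def
proof (safe)
  fix l i assume x: "\<forall>l. x l \<noteq> 0 \<longrightarrow> l \<subseteq> {1..N}" and y: "\<forall>l. y l \<noteq> 0 \<longrightarrow> l \<subseteq> {1..N}"
    and nz: "gmul x y l \<noteq> 0" and i: "i \<in> l"
  from gmul_nonzero[OF nz] obtain m where "m \<subseteq> l" "x m \<noteq> 0" "y (l - m) \<noteq> 0" by blast
  then have "m \<subseteq> {1..N}" "l - m \<subseteq> {1..N}" using x y by auto
  then show "i \<in> {1..N}" using i by blast
qed

lemma RS_finite: "x \<in> RS N \<Longrightarrow> x l \<noteq> 0 \<Longrightarrow> finite l"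
  unfolding RS_def by (auto intro: finite_subset)

lemma card_split: "finite l \<Longrightarrow> m \<subseteq> l \<Longrightarrow> card l = card m + card (l - m)"
proof -
  assume a: "finite l" "m \<subseteq> l"
  then have f: "finite m" by (rule finite_subset[rotated])
  have "card (l - m) = card l - card m" by (rule card_Diff_subset[OF f a(2)])
  moreover have "card m \<le> card l" by (rule card_mono[OF a])
  ultimately show ?thesis by simp
qed

lemma gmul_parity:
  assumes "gmul x y l \<noteq> 0" "\<And>l. x l \<noteq> 0 \<Longrightarrow> finite l \<and> P (card l)" "\<And>l. y l \<noteq> 0 \<Longrightarrow> finite l \<and> Q (card l)"
  shows "finite l \<and> (\<exists>p q. P p \<and> Q q \<and> card l = p + q)"
proof -
  from gmul_nonzero[OF assms(1)] obtain m where m: "finite l" "m \<subseteq> l" "x m \<noteq> 0" "y (l - m) \<noteq> 0" by blast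
  have "card l = card m + card (l - m)" using m(1,2)
    by (rule card_split)
  then show ?thesis using assms(2)[OF m(3)] assms(3)[OF m(4)] m(1) by blast
qed

lemma geven_gmul: "geven N x \<Longrightarrow> geven N y \<Longrightarrow> geven N (gmul x y)"
  unfolding geven_def
proof (intro conjI allI impI)
  assume x: "x \<in> RS N \<and> (\<forall>l. x l \<noteq> 0 \<longrightarrow> even (card l))" and y: "y \<in> RS N \<and> (\<forall>l. y l \<noteq> 0 \<longrightarrow> even (card l))"
  then show "gmul x y \<in> RS N" by (simp add: gmul_RS)
  fix l assume "gmul x y l \<noteq> 0"
  have "finite l \<and> (\<exists>p q. even p \<and> even q \<and> card l = p + q)"
    by (rule gmul_parity[OF \<open>gmul x y l \<noteq> 0\<close>]) (use x y RS_finite in blast)+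
  then show "even (card l)" by auto
qed

lemma godd_gmul: "godd N x \<Longrightarrow> godd N y \<Longrightarrow> geven N (gmul x y)"
  unfolding geven_def godd_def
proof (intro conjI allI impI)
  assume x: "x \<in> RS N \<and> (\<forall>l. x l \<noteq> 0 \<longrightarrow> odd (card l))" and y: "y \<in> RS N \<and> (\<forall>l. y l \<noteq> 0 \<longrightarrow> odd (card l))"
  then show "gmul x y \<in> RS N" by (simp add: gmul_RS)
  fix l assume "gmul x y l \<noteq> 0"
  have "finite l \<and> (\<exists>p q. odd p \<and> odd q \<and> card l = p + q)"
    by (rule gmul_parity[OF \<open>gmul x y l \<noteq> 0\<close>]) (use x y RS_finite in blast)+
  then show "even (card l)" by auto
qed

lemma nz_add: "(a::real) + b \<noteq> 0 \<Longrightarrow> a \<noteq> 0 \<or> b \<noteq> 0" by auto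
lemma nz_sub: "(a::real) - b \<noteq> 0 \<Longrightarrow> a \<noteq> 0 \<or> b \<noteq> 0" by auto

lemma geven_gadd: "geven N x \<Longrightarrow> geven N y \<Longrightarrow> geven N (gadd x y)"
  unfolding geven_def RS_def gadd_def mem_Collect_eq
  by (intro conjI allI impI; drule nz_add; blast)

lemma geven_gsub: "geven N x \<Longrightarrow> geven N y \<Longrightarrow> geven N (gsub x y)"
  unfolding geven_def RS_def gsub_def mem_Collect_eq
  by (intro conjI allI impI; drule nz_sub; blast)

lemma geven_gscale: "geven N x \<Longrightarrow> geven N (gscale c x)"
  unfolding geven_def RS_def gscale_def by auto

lemma geven_gconst: "geven N (gconst c)"
  unfolding geven_def RS_def gconst_def by auto

lemma geven_mono: "geven N x \<Longrightarrow> N \<le> M \<Longrightarrow> geven M x"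
  unfolding geven_def RS_def mem_Collect_eq
proof (intro conjI allI impI)
  fix l assume a: "(\<forall>l. x l \<noteq> 0 \<longrightarrow> l \<subseteq> {1..N}) \<and> (\<forall>l. x l \<noteq> 0 \<longrightarrow> even (card l))" "N \<le> M" "x l \<noteq> 0"
  then have "l \<subseteq> {1..N}" by blast
  moreover have "{1..N} \<subseteq> {1..M}" using a(2) by auto
  ultimately show "l \<subseteq> {1..M}" by blast
  show "even (card l)" using a by blast
qed

lemma RS_gsub: "x \<in> RS N \<Longrightarrow> y \<in> RS N \<Longrightarrow> gsub x y \<in> RS N"
  unfolding RS_def gsub_def mem_Collect_eq
  by (intro allI impI; drule nz_sub; blast)
lemma RS_gadd: "x \<in> RS N \<Longrightarrow> y \<in> RS N \<Longrightarrow> gadd x y \<in> RS N"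
  unfolding RS_def gadd_def mem_Collect_eq
  by (intro allI impI; drule nz_add; blast)
lemma RS_gscale: "x \<in> RS N \<Longrightarrow> gscale c x \<in> RS N"
  unfolding RS_def gscale_def by auto
lemma RS_gconst: "gconst c \<in> RS N"
  unfolding RS_def gconst_def by auto

lemma gmul_comm:
  assumes x: "\<And>l. x l \<noteq> 0 \<Longrightarrow> finite l \<and> even (card l)"
  shows "gmul x y = gmul y x"
proof (rule ext)
  fix l
  show "gmul x y l = gmul y x l"
  proof (cases "finite l")
    case False then show ?thesis by (simp add: gmul_def)
  next
    case fin: True
    have "gmul y x l = (\<Sum>m\<in>Pow l. gsign (l - m) (l - (l - m)) * y (l - m) * x (l - (l - m)))"
      unfolding gmul_def
      by (rule sum.reindex_bij_witness[where i = "\<lambda>m. l - m" and j = "\<lambda>m. l - m"]) (auto simp: Diff_Diff_Int Int_absorb1 Int_absorb2)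
    also have "\<dots> = (\<Sum>m\<in>Pow l. gsign m (l - m) * x m * y (l - m))"
    proof (rule sum.cong[OF refl])
      fix m assume m: "m \<in> Pow l"
      then have e: "l - (l - m) = m" by auto
      show "gsign (l - m) (l - (l - m)) * y (l - m) * x (l - (l - m)) = gsign m (l - m) * x m * y (l - m)"
      proof (cases "x m = 0")
        case True then show ?thesis by (simp add: e)
      next
        case False
        then have "finite m" "even (card m)" using x by auto
        then have "gsign (l - m) m = gsign m (l - m)" using gsign_swap_even fin by auto
        then show ?thesis by (simp add: e)
      qed
    qed
    finally show ?thesis by (simp add: gmul_def)
  qed
qed

lemma gmul_gadd_left: "gmul (gadd x y) z = gadd (gmul x z) (gmul y z)"
  by (rule ext) (simp add: gmul_def gadd_def algebra_simps sum.distrib)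

lemma gmul_gadd_right: "gmul z (gadd x y) = gadd (gmul z x) (gmul z y)"
  by (rule ext) (simp add: gmul_def gadd_def algebra_simps sum.distrib)

lemma gmul_gconst_left:
  assumes "\<And>l. x l \<noteq> 0 \<Longrightarrow> finite l"
  shows "gmul (gconst c) x = gscale c x"
proof (rule ext)
  fix l
  show "gmul (gconst c) x l = gscale c x l"
  proof (cases "finite l")
    case False then show ?thesis using assms by (auto simp: gmul_def gscale_def)
  next
    case True
    have "gmul (gconst c) x l = (\<Sum>m\<in>Pow l. if m = {} then c * x l else 0)"
      unfolding gmul_def gconst_def by (rule sum.cong) auto
    also have "\<dots> = c * x l" using True by simp
    finally show ?thesis by (simp add: gscale_def)
  qed
qed

lemma gmul_gconst_right:
  assumes "\<And>l. x l \<noteq> 0 \<Longrightarrow> finite l"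
  shows "gmul x (gconst c) = gscale c x"
proof (rule ext)
  fix l
  show "gmul x (gconst c) l = gscale c x l"
  proof (cases "finite l")
    case False then show ?thesis using assms by (auto simp: gmul_def gscale_def)
  next
    case True
    have "gmul x (gconst c) l = (\<Sum>m\<in>Pow l. if m = l then c * x l else 0)"
      unfolding gmul_def gconst_def by (rule sum.cong) (auto simp: mult_ac)
    also have "\<dots> = c * x l" using True by simp
    finally show ?thesis by (simp add: gscale_def)
  qed
qed

lemma gmul_empty: "gmul x y {} = x {} * y {}"
  by (simp add: gmul_def)

lemma gpow_empty: "gpow x j {} = (x {}) ^ j"
  by (induction j) (simp_all add: gconst_def gmul_empty)

lemma gpow_RS: "x \<in> RS N \<Longrightarrow> gpow x j \<in> RS N"
  by (induction j) (simp_all add: RS_gconst gmul_RS)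

lemma gpow_nil:
  assumes "x \<in> RS N" "x {} = 0"
  shows "gpow x j l \<noteq> 0 \<Longrightarrow> finite l \<and> j \<le> card l"
proof (induction j arbitrary: l)
  case 0
  then show ?case by (simp add: gconst_def split: if_splits)
next
  case (Suc j)
  from gmul_nonzero[of x "gpow x j" l] Suc.prems obtain m where
    m: "finite l" "m \<subseteq> l" "x m \<noteq> 0" "gpow x j (l - m) \<noteq> 0" by auto
  have "m \<noteq> {}" using m(3) assms(2) by auto
  then have "card m > 0" using m(1,2) by (meson card_gt_0_iff finite_subset)
  moreover have "card l = card m + card (l - m)" using m(1,2)
    by (rule card_split)
  moreover have "j \<le> card (l - m)" using Suc.IH[OF m(4)] by simp
  ultimately show ?case using m(1) by simp
qed

lemma gpow_zero:
  assumes "x \<in> RS N" "x {} = 0"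
  shows "gpow x (Suc N) = gconst 0"
proof (rule ext)
  fix l
  show "gpow x (Suc N) l = gconst 0 l"
  proof (rule ccontr)
    assume ne: "gpow x (Suc N) l \<noteq> gconst 0 l"
    then have nz: "gpow x (Suc N) l \<noteq> 0" by (simp add: gconst_def)
    have "l \<subseteq> {1..N}" using gpow_RS[OF assms(1), of "Suc N"] nz unfolding RS_def by blast
    then have "card l \<le> card {1..N}" by (intro card_mono) auto
    then have "card l \<le> N" by simp
    with gpow_nil[OF assms nz] show False by simp
  qed
qed



definition evset :: "grass \<Rightarrow> bool" where "evset x \<longleftrightarrow> (\<exists>N. geven N x)"

typedef ev = "{x::grass. evset x}" morphisms rep Abs_ev
  unfolding evset_def by (rule exI[of _ "gconst 0"]) (auto intro: geven_gconst)

lemma evset_rep[simp]: "evset (rep X)" using rep by simp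
lemma rep_Abs: "evset x \<Longrightarrow> rep (Abs_ev x) = x" by (simp add: Abs_ev_inverse)
lemma geven_evset: "geven N x \<Longrightarrow> evset x" unfolding evset_def by blast

lemma evset_fin: "evset x \<Longrightarrow> x l \<noteq> 0 \<Longrightarrow> finite l \<and> even (card l)"
  unfolding evset_def geven_def using RS_finite by blast

lemma evset_gadd: "evset x \<Longrightarrow> evset y \<Longrightarrow> evset (gadd x y)"
  unfolding evset_def by (metis geven_gadd geven_mono max.cobounded1 max.cobounded2)
lemma evset_gsub: "evset x \<Longrightarrow> evset y \<Longrightarrow> evset (gsub x y)"
  unfolding evset_def by (metis geven_gsub geven_mono max.cobounded1 max.cobounded2)
lemma evset_gmul: "evset x \<Longrightarrow> evset y \<Longrightarrow> evset (gmul x y)"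
  unfolding evset_def by (metis geven_gmul geven_mono max.cobounded1 max.cobounded2)
lemma evset_gscale: "evset x \<Longrightarrow> evset (gscale c x)"
  unfolding evset_def using geven_gscale by blast
lemma evset_gconst: "evset (gconst c)"
  unfolding evset_def using geven_gconst by blast

instantiation ev :: comm_ring_1
begin
definition zero_ev_def: "0 = Abs_ev (gconst 0)"
definition one_ev_def: "1 = Abs_ev (gconst 1)"
definition plus_ev_def: "X + Y = Abs_ev (gadd (rep X) (rep Y))"
definition minus_ev_def: "X - Y = Abs_ev (gsub (rep X) (rep Y))"
definition uminus_ev_def: "- X = Abs_ev (gscale (-1) (rep X))"
definition times_ev_def: "X * Y = Abs_ev (gmul (rep X) (rep Y))"

lemma rep_zero: "rep (0::ev) = gconst 0" by (simp add: zero_ev_def rep_Abs evset_gconst)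
lemma rep_one: "rep (1::ev) = gconst 1" by (simp add: one_ev_def rep_Abs evset_gconst)
lemma rep_plus: "rep (X + Y) = gadd (rep X) (rep Y)" by (simp add: plus_ev_def rep_Abs evset_gadd)
lemma rep_minus: "rep (X - Y) = gsub (rep X) (rep Y)" by (simp add: minus_ev_def rep_Abs evset_gsub)
lemma rep_uminus: "rep (- X) = gscale (-1) (rep X)" by (simp add: uminus_ev_def rep_Abs evset_gscale)
lemma rep_times: "rep (X * Y) = gmul (rep X) (rep Y)" by (simp add: times_ev_def rep_Abs evset_gmul)

lemma ev_eqI: "(\<And>l. rep X l = rep Y l) \<Longrightarrow> X = Y"
  by (metis rep_inject ext)

instance
proof
  fix a b c :: ev
  show "a + b + c = a + (b + c)" by (rule ev_eqI) (simp add: rep_plus gadd_def)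
  show "a + b = b + a" by (rule ev_eqI) (simp add: rep_plus gadd_def)
  show "0 + a = a" by (rule ev_eqI) (simp add: rep_plus rep_zero gadd_def gconst_def)
  show "- a + a = 0" by (rule ev_eqI) (simp add: rep_plus rep_zero rep_uminus gadd_def gconst_def gscale_def)
  show "a - b = a + - b" by (rule ev_eqI) (simp add: rep_plus rep_minus rep_uminus gadd_def gsub_def gscale_def)
  show "a * b * c = a * (b * c)" by (rule ev_eqI) (simp add: rep_times gmul_assoc)
  show "a * b = b * a" by (rule ev_eqI) (metis rep_times gmul_comm evset_fin evset_rep)
  show "1 * a = a"
  proof (rule ev_eqI)
    fix l
    have "gmul (gconst 1) (rep a) = gscale 1 (rep a)"
      by (rule gmul_gconst_left) (use evset_fin evset_rep in blast)
    then show "rep (1 * a) l = rep a l" by (simp add: rep_times rep_one gscale_def)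
  qed
  show "(a + b) * c = a * c + b * c" by (rule ev_eqI) (simp add: rep_times rep_plus gmul_gadd_left)
  show "(0::ev) \<noteq> 1"
  proof
    assume "(0::ev) = 1"
    then have "rep (0::ev) {} = rep (1::ev) {}" by simp
    then show False by (simp add: rep_zero rep_one gconst_def)
  qed
qed
end

definition C :: "real \<Rightarrow> ev" where "C c = Abs_ev (gconst c)"

lemma rep_C: "rep (C c) = gconst c" by (simp add: C_def rep_Abs evset_gconst)

lemma rep_pow: "rep (X ^ n) = gpow (rep X) n"
  by (induction n) (simp_all add: rep_one rep_times)

lemma rep_sum: "finite A \<Longrightarrow> rep (sum F A) l = (\<Sum>a\<in>A. rep (F a) l)"
  by (induction A rule: finite_induct) (simp_all add: rep_zero rep_plus gadd_def gconst_def)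

lemma rep_C_times: "rep (C c * X) = gscale c (rep X)"
proof -
  have "gmul (gconst c) (rep X) = gscale c (rep X)"
    by (rule gmul_gconst_left) (use evset_fin evset_rep in blast)
  then show ?thesis by (simp add: rep_times rep_C)
qed

lemma C_mult: "C a * C b = C (a * b)"
  by (rule ev_eqI) (simp add: rep_C_times rep_C gscale_def gconst_def)
lemma C_one: "C 1 = 1" by (simp add: C_def one_ev_def)
lemma C_minus_one: "C (-1) = - 1"
  by (rule ev_eqI) (simp add: rep_C rep_uminus rep_one gscale_def gconst_def)

lemma ev_inv:
  assumes RS: "rep Y \<in> RS N" and nz: "body (rep Y) \<noteq> 0"
  shows "\<exists>I. rep I = ginv N (rep Y) \<and> Y * I = 1"
proof -
  define y0 where "y0 = body (rep Y)"
  define S where "S = Y - C y0"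
  define T where "T = C (-1 / y0) * S"
  define I where "I = C (1 / y0) * (\<Sum>j\<le>N. T ^ j)"
  have repS: "rep S = soul (rep Y)" by (simp add: S_def rep_minus rep_C soul_def y0_def)
  have repT: "rep T = gscale (-1 / y0) (soul (rep Y))" by (simp add: T_def rep_C_times repS)
  have "rep I = ginv N (rep Y)"
  proof (rule ext)
    fix l
    show "rep I l = ginv N (rep Y) l"
      by (simp add: I_def rep_C_times gscale_def rep_sum rep_pow repT ginv_def y0_def)
  qed
  moreover have "Y * I = 1"
  proof -
    have TRS: "rep T \<in> RS N" unfolding repT soul_def
      by (intro RS_gscale RS_gsub RS RS_gconst)
    have T0: "rep T {} = 0" by (simp add: repT soul_def gscale_def gsub_def gconst_def body_def)
    have Tn: "T ^ Suc N = 0"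
      by (rule ev_eqI) (simp only: rep_pow gpow_zero[OF TRS T0] rep_zero)
    have cc: "C y0 * C (1 / y0) = 1" using nz by (simp add: C_mult y0_def C_one)
    have cm: "C y0 * C (-1 / y0) = - 1" using nz by (simp add: C_mult y0_def C_minus_one)
    have Y: "Y = C y0 * (1 - T)"
    proof -
      have "C y0 * (1 - T) = C y0 - (C y0 * C (-1 / y0)) * S" by (simp add: T_def algebra_simps)
      also have "\<dots> = Y" using cm by (simp add: S_def)
      finally show ?thesis by simp
    qed
    have "Y * I = (C y0 * C (1 / y0)) * ((1 - T) * (\<Sum>j\<le>N. T ^ j))"
      by (simp add: Y I_def mult_ac)
    also have "\<dots> = 1" by (simp only: cc sum_gp_basic Tn) simp
    finally show ?thesis .
  qed
  ultimately show ?thesis by blast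
qed



lemma gsign_abs: "\<bar>gsign m n\<bar> \<le> 1" by (simp add: gsign_def)

lemma period2:
  fixes g :: "int \<Rightarrow> 'a"
  assumes p: "\<And>i. g (i + 2) = g i"
  shows "g i = g (i mod 2)"
proof -
  have s: "g (j + 2 * int n) = g j" for j n
  proof (induction n)
    case 0 then show ?case by simp
  next
    case (Suc n)
    have "g (j + 2 * int (Suc n)) = g ((j + 2 * int n) + 2)" by (simp add: algebra_simps)
    also have "\<dots> = g (j + 2 * int n)" by (rule p)
    finally show ?case using Suc by simp
  qed
  have d: "i = i mod 2 + 2 * (i div 2)" by simp
  show ?thesis
  proof (cases "i div 2 \<ge> 0")
    case True
    have "g (i mod 2 + 2 * int (nat (i div 2))) = g (i mod 2)" by (rule s)
    then show ?thesis using True d by simp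
  next
    case False
    have "g (i + 2 * int (nat (- (i div 2)))) = g i" by (rule s)
    moreover have "i + 2 * int (nat (- (i div 2))) = i mod 2"
    proof -
      have "int (nat (- (i div 2))) = - (i div 2)" using False by simp
      then show ?thesis using d by linarith
    qed
    ultimately show ?thesis by simp
  qed
qed

lemma body_gsqrt: "gsqrt N z {} = sqrt (z {})"
proof -
  let ?t = "gscale (1 / body z) (soul z)"
  have t0: "?t {} = 0" by (simp add: gscale_def soul_def gsub_def gconst_def body_def)
  have "(\<Sum>j\<le>N. ((1/2::real) gchoose j) * gpow ?t j {}) = (\<Sum>j\<le>N. if j = 0 then 1 else 0)"
    by (rule sum.cong) (auto simp: gpow_empty t0)
  also have "\<dots> = 1" by simp
  finally show ?thesis by (simp add: gsqrt_def body_def)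
qed

definition Bd :: "nat \<Rightarrow> grass \<Rightarrow> real \<Rightarrow> real \<Rightarrow> real \<Rightarrow> bool" where
  "Bd N x K P Q \<longleftrightarrow> (\<forall>l. l \<subseteq> {1..N} \<longrightarrow> \<bar>x l\<bar> \<le> K * P ^ card l * Q)"

lemma Bd_add: "Bd N x K1 P Q \<Longrightarrow> Bd N y K2 P Q \<Longrightarrow> Bd N (gadd x y) (K1 + K2) P Q"
  unfolding Bd_def gadd_def
proof (intro allI impI)
  fix l :: "nat set" assume a: "\<forall>l. l \<subseteq> {1..N} \<longrightarrow> \<bar>x l\<bar> \<le> K1 * P ^ card l * Q"
    "\<forall>l. l \<subseteq> {1..N} \<longrightarrow> \<bar>y l\<bar> \<le> K2 * P ^ card l * Q" "l \<subseteq> {1..N}"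
  have "\<bar>x l + y l\<bar> \<le> \<bar>x l\<bar> + \<bar>y l\<bar>" by (rule abs_triangle_ineq)
  also have "\<dots> \<le> K1 * P ^ card l * Q + K2 * P ^ card l * Q" using a by (intro add_mono) auto
  also have "\<dots> = (K1 + K2) * P ^ card l * Q" by (simp add: algebra_simps)
  finally show "\<bar>x l + y l\<bar> \<le> (K1 + K2) * P ^ card l * Q" .
qed

lemma Bd_mul:
  assumes x: "Bd N x K1 P Q1" and y: "Bd N y K2 P Q2"
    and pos: "K1 \<ge> 0" "K2 \<ge> 0" "P \<ge> 0" "Q1 \<ge> 0" "Q2 \<ge> 0"
  shows "Bd N (gmul x y) (2 ^ N * K1 * K2) P (Q1 * Q2)"
  unfolding Bd_def
proof (intro allI impI)
  fix l :: "nat set" assume l: "l \<subseteq> {1..N}"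
  have fin: "finite l" using l by (rule finite_subset) simp
  have cl: "card l \<le> N"
  proof -
    have "card l \<le> card {1..N}" using l by (intro card_mono) auto
    then show ?thesis by simp
  qed
  let ?B = "K1 * K2 * P ^ card l * (Q1 * Q2)"
  have B0: "?B \<ge> 0" using pos by simp
  have "\<bar>gmul x y l\<bar> \<le> (\<Sum>m\<in>Pow l. \<bar>gsign m (l - m) * x m * y (l - m)\<bar>)"
    unfolding gmul_def by (rule sum_abs)
  also have "\<dots> \<le> (\<Sum>m\<in>Pow l. ?B)"
  proof (rule sum_mono)
    fix m assume m: "m \<in> Pow l"
    have ml: "m \<subseteq> {1..N}" "l - m \<subseteq> {1..N}" using m l by auto
    have cs: "card l = card m + card (l - m)" using fin m by (intro card_split) auto
    have "\<bar>gsign m (l - m) * x m * y (l - m)\<bar> = \<bar>gsign m (l - m)\<bar> * (\<bar>x m\<bar> * \<bar>y (l - m)\<bar>)"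
      by (simp add: abs_mult)
    also have "\<dots> \<le> 1 * (\<bar>x m\<bar> * \<bar>y (l - m)\<bar>)" by (intro mult_right_mono gsign_abs) simp
    also have "\<dots> \<le> (K1 * P ^ card m * Q1) * (K2 * P ^ card (l - m) * Q2)"
      using x y ml pos unfolding Bd_def by (simp, intro mult_mono) auto
    also have "\<dots> = ?B" by (simp add: cs power_add algebra_simps)
    finally show "\<bar>gsign m (l - m) * x m * y (l - m)\<bar> \<le> ?B" .
  qed
  also have "\<dots> = 2 ^ card l * ?B" using fin by (simp add: card_Pow)
  also have "\<dots> \<le> 2 ^ N * ?B" using cl B0 by (intro mult_right_mono power_increasing) auto
  also have "\<dots> = 2 ^ N * K1 * K2 * P ^ card l * (Q1 * Q2)" by (simp add: algebra_simps)
  finally show "\<bar>gmul x y l\<bar> \<le> 2 ^ N * K1 * K2 * P ^ card l * (Q1 * Q2)" .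
qed

lemma Bd_mono: "Bd N x K P Q \<Longrightarrow> K \<le> K' \<Longrightarrow> P \<ge> 0 \<Longrightarrow> Q \<ge> 0 \<Longrightarrow> Bd N x K' P Q"
  unfolding Bd_def
  by (meson mult_right_mono zero_le_power order.trans mult_nonneg_nonneg)

lemma Bd_const:
  assumes P: "P \<ge> 1"
  shows "Bd N x (\<Sum>l\<in>Pow {1..N}. \<bar>x l\<bar>) P 1"
  unfolding Bd_def
proof (intro allI impI)
  fix l :: "nat set" assume l: "l \<subseteq> {1..N}"
  have "\<bar>x l\<bar> \<le> (\<Sum>l\<in>Pow {1..N}. \<bar>x l\<bar>)"
    using l by (intro member_le_sum) auto
  also have "\<dots> * 1 \<le> (\<Sum>l\<in>Pow {1..N}. \<bar>x l\<bar>) * P ^ card l"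
    using P by (intro mult_left_mono sum_nonneg one_le_power) auto
  finally show "\<bar>x l\<bar> \<le> (\<Sum>l\<in>Pow {1..N}. \<bar>x l\<bar>) * P ^ card l * 1" by simp
qed



lemma bigo_cof:
  fixes f g :: "int \<Rightarrow> real"
  assumes "\<And>i. i \<noteq> 0 \<Longrightarrow> \<bar>f i\<bar> \<le> c * \<bar>g i\<bar>"
  shows "f \<in> O[cofinite](g)"
proof (rule bigoI)
  have "{i. \<not> (norm (f i) \<le> c * norm (g i))} \<subseteq> {0}" using assms by auto
  then show "eventually (\<lambda>i. norm (f i) \<le> c * norm (g i)) cofinite"
    unfolding eventually_cofinite by (rule finite_subset) simp
qed

lemma rep_eqI: "rep X = rep Y \<Longrightarrow> X = Y" by (simp add: rep_inject)

lemma body_times: "rep (X * Y) {} = rep X {} * rep Y {}"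
  by (simp add: rep_times gmul_empty)

lemma godd_empty: "godd N m \<Longrightarrow> m {} = 0"
  unfolding godd_def by auto

lemma Wof_geven: "(\<And>t. godd N (mu t)) \<Longrightarrow> geven N (Wof mu ot)"
  unfolding Wof_def by (auto intro: godd_gmul)

lemma Wof_empty: assumes "\<And>t. godd N (mu t)" shows "Wof mu ot {} = 0"
proof -
  have "mu True {} = 0" "mu False {} = 0" using assms godd_empty by blast+
  then show ?thesis unfolding Wof_def by (simp add: gmul_empty)
qed

lemma s2k_bound:
  assumes "\<And>l. l \<subseteq> {1..N} \<Longrightarrow> card l = 2 * k \<Longrightarrow> \<bar>y l\<bar> \<le> M" and M: "M \<ge> 0"
  shows "gnorm N (s2k k y) \<le> 2 ^ N * M"
proof -
  have "gnorm N (s2k k y) \<le> (\<Sum>l\<in>Pow {1..N}. M)"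
    unfolding gnorm_def s2k_def
  proof (rule sum_mono)
    fix l assume l: "l \<in> Pow {1..N}"
    then have "finite l" by (auto intro: finite_subset)
    then show "\<bar>if finite l \<and> card l = 2 * k then y l else 0\<bar> \<le> M" using assms l by auto
  qed
  also have "\<dots> = 2 ^ N * M" by (simp add: card_Pow)
  finally show ?thesis .
qed



theorem lemma5p4:
  fixes N :: nat
    and a h :: grass
    and b c :: "int \<Rightarrow> grass"
    and mu :: "int \<Rightarrow> bool \<Rightarrow> grass"
    and oa ob ob' :: "int \<Rightarrow> bool"
  assumes a_even: "geven N a" and a_pos: "body a > 0"
    and b_even: "\<And>i. geven N (b i)" and b_pos: "\<And>i. body (b i) > 0"
    and c_even: "\<And>i. geven N (c i)" and c_pos: "\<And>i. body (c i) > 0"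
    and mu_odd: "\<And>i t. godd N (mu i t)"
    and flip_next: "\<And>i. gmul (b (i + 1)) (b (i - 1)) = flip_rhs a (b i) (Wof (mu i) (ob' i))"
    and flip_prev: "\<And>i. gmul (b i) (b (i + 2)) = flip_rhs a (b (i + 1)) (Wof (mu i) (ob i))"
    and flip_a: "\<And>i. gmul a (c i) = flip_rhs (b i) (b (i + 1)) (Wof (mu i) (oa i))"
    and Wa_const: "\<And>i. Wof (mu i) (oa i) = Wof (mu 0) (oa 0)"
    and h_def: "\<And>i. h = semiper N a (b i) (b (i + 1))
                          (Wof (mu i) (oa i)) (Wof (mu i) (ob i)) (Wof (mu i) (ob' i))"
  shows "let Wa = Wof (mu 0) (oa 0);
             x = gsub (gmul a h) Wa;
             r = gscale (1/2) (gadd x (gsqrt N (gsub (gmul x x) (gconst 4))));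
             R = body r
         in \<forall>k::nat.
              (\<lambda>i. gnorm N (s2k k (b i))) \<in> O[cofinite](\<lambda>i. real_of_int \<bar>i\<bar> ^ k * R ^ nat \<bar>i\<bar>)
            \<and> (\<lambda>i. gnorm N (s2k k (c i))) \<in> O[cofinite](\<lambda>i. real_of_int \<bar>i\<bar> ^ (2 * k) * R ^ (2 * nat \<bar>i\<bar>))"
proof -
  define Wa where "Wa = Wof (mu 0) (oa 0)"
  define x where "x = gsub (gmul a h) Wa"
  define r where "r = gscale (1/2) (gadd x (gsqrt N (gsub (gmul x x) (gconst 4))))"
  define R where "R = body r"
  have Wg: "geven N (Wof (mu i) t)" for i t by (rule Wof_geven) (rule mu_odd)
  have W0: "Wof (mu i) t {} = 0" for i t by (rule Wof_empty) (rule mu_odd)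
  define A where "A = Abs_ev a"
  define B where "B i = Abs_ev (b i)" for i
  define U where "U i = Abs_ev (Wof (mu i) (ob i))" for i
  define V where "V i = Abs_ev (Wof (mu i) (ob' i))" for i
  define WA where "WA = Abs_ev Wa"
  define CC where "CC i = Abs_ev (c i)" for i
  have rA[simp]: "rep A = a" unfolding A_def by (rule rep_Abs[OF geven_evset[OF a_even]])
  have rB[simp]: "rep (B i) = b i" for i unfolding B_def by (rule rep_Abs[OF geven_evset[OF b_even]])
  have rU[simp]: "rep (U i) = Wof (mu i) (ob i)" for i unfolding U_def by (rule rep_Abs[OF geven_evset[OF Wg]])
  have rV[simp]: "rep (V i) = Wof (mu i) (ob' i)" for i unfolding V_def by (rule rep_Abs[OF geven_evset[OF Wg]])
  have rWA[simp]: "rep WA = Wa" unfolding WA_def Wa_def by (rule rep_Abs[OF geven_evset[OF Wg]])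
  have rCC[simp]: "rep (CC i) = c i" for i unfolding CC_def by (rule rep_Abs[OF geven_evset[OF c_even]])
  have aRS: "a \<in> RS N" using a_even by (simp add: geven_def)
  have bRS: "b i \<in> RS N" for i using b_even[of i] by (simp add: geven_def)
  have a0: "a {} > 0" using a_pos by (simp add: body_def)
  have b0: "b i {} > 0" for i using b_pos[of i] by (simp add: body_def)
  have inv: "\<exists>I. rep I = ginv N (rep Y) \<and> Y * I = 1" if "rep Y \<in> RS N" "rep Y {} \<noteq> 0" for Y
    using ev_inv[OF that(1)] that(2) by (simp add: body_def)
  have Hexp: "\<exists>I1 I2 I3 I4 I5 I6. h = rep (A*I1 + B i*I2 + B (i+1)*I3 + (WA*I4 + U i*I5 + V i*I6))
     \<and> (B i * B (i+1))*I1 = 1 \<and> (A*B (i+1))*I2 = 1 \<and> (A*B i)*I3 = 1 \<and> A*I4 = 1 \<and> B i*I5 = 1 \<and> B (i+1)*I6 = 1" for i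
  proof -
    obtain I1 where I1: "rep I1 = ginv N (gmul (b i) (b (i+1)))" "(B i * B (i+1))*I1 = 1"
      using inv[of "B i * B (i+1)"] b0[of i] b0[of "i+1"] by (auto simp: rep_times gmul_RS bRS gmul_empty)
    obtain I2 where I2: "rep I2 = ginv N (gmul a (b (i+1)))" "(A * B (i+1))*I2 = 1"
      using inv[of "A * B (i+1)"] a0 b0[of "i+1"] by (auto simp: rep_times gmul_RS bRS aRS gmul_empty)
    obtain I3 where I3: "rep I3 = ginv N (gmul a (b i))" "(A * B i)*I3 = 1"
      using inv[of "A * B i"] a0 b0[of i] by (auto simp: rep_times gmul_RS bRS aRS gmul_empty)
    obtain I4 where I4: "rep I4 = ginv N a" "A*I4 = 1"
      using inv[of A] a0 aRS by auto
    obtain I5 where I5: "rep I5 = ginv N (b i)" "B i*I5 = 1"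
      using inv[of "B i"] b0[of i] bRS by auto
    obtain I6 where I6: "rep I6 = ginv N (b (i+1))" "B (i+1)*I6 = 1"
      using inv[of "B (i+1)"] b0[of "i+1"] bRS by auto
    have "h = rep (A*I1 + B i*I2 + B (i+1)*I3 + (WA*I4 + U i*I5 + V i*I6))"
      using h_def[of i] Wa_const[of i]
      by (simp add: semiper_def gdiv_def rep_plus rep_times I1 I2 I3 I4 I5 I6 Wa_def)
    then show ?thesis using I1 I2 I3 I4 I5 I6 by blast
  qed
  define H where "H = Abs_ev h"
  have rH[simp]: "rep H = h"
  proof -
    obtain Z where "h = rep Z" using Hexp[of 0] by blast
    then show ?thesis unfolding H_def using rep_Abs evset_rep by metis
  qed
  have hh: "H*(A*(B i * B (i+1))) = A*A + B i * B i + B (i+1) * B (i+1) + WA*(B i * B (i+1)) + U i*(A*B (i+1)) + V i*(A*B i)" for i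
  proof -
    obtain I1 I2 I3 I4 I5 I6 where E: "h = rep (A*I1 + B i*I2 + B (i+1)*I3 + (WA*I4 + U i*I5 + V i*I6))"
      "(B i * B (i+1))*I1 = 1" "(A*B (i+1))*I2 = 1" "(A*B i)*I3 = 1" "A*I4 = 1" "B i*I5 = 1" "B (i+1)*I6 = 1"
      using Hexp[of i] by blast
    have "H = A*I1 + B i*I2 + B (i+1)*I3 + (WA*I4 + U i*I5 + V i*I6)"
      by (rule rep_eqI) (simp add: E(1))
    then show ?thesis by (rule h_expand) (use E in auto)
  qed
  have fn: "B (i+1) * B (i-1) = A*A + B i * B i + A * B i * V i" for i
    by (rule rep_eqI) (simp add: rep_times rep_plus flip_next flip_rhs_def)
  have fp: "B i * B (i+2) = A*A + B (i+1) * B (i+1) + A * B (i+1) * U i" for i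
    by (rule rep_eqI) (simp add: rep_times rep_plus flip_prev flip_rhs_def)
  have bu: "\<exists>z. B i * z = 1" for i using inv[of "B i"] b0[of i] bRS by auto
  have RA: "B (i+1) + B (i-1) = (A*H - WA) * B i - A * U i" "A * U (i+2) = A * U i" for i
    using rec_abstract[of B A V U H WA, OF fn fp hh bu] by auto
  define t where "t i = gmul a (Wof (mu i) (ob i))" for i
  have tper: "t (i+2) = t i" for i
    using arg_cong[OF RA(2)[of i], of rep] by (simp add: rep_times t_def)
  have recg: "gadd (b (i+1)) (b (i-1)) = gsub (gmul x (b i)) (t i)" for i
    using arg_cong[OF RA(1)[of i], of rep] by (simp add: rep_times rep_plus rep_minus t_def x_def)
  have recl: "b (i+1) l + b (i-1) l = gmul x (b i) l - t i l" for i l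
    using fun_cong[OF recg[of i], of l] by (simp add: gadd_def gsub_def)
  define x0 where "x0 = x {}"
  have t0: "t i {} = 0" for i by (simp add: t_def gmul_empty W0)
  have recb: "b (i+1) {} + b (i-1) {} = x0 * b i {}" for i
    using recl[of i "{}"] by (simp add: gmul_empty t0 x0_def)
  have flb: "b (i+1) {} * b (i-1) {} = a {} * a {} + b i {} * b i {}" for i
    using fun_cong[OF flip_next[of i], of "{}"] by (simp add: gmul_empty flip_rhs_def gadd_def W0)
  have x0gt: "x0 > 2"
  proof -
    define p where "p = b 1 {}"
    define q where "q = b (-1) {}"
    define \<beta> where "\<beta> = b 0 {}"
    have pq: "p + q = x0 * \<beta>" using recb[of 0] by (simp add: p_def q_def \<beta>_def)
    have pq2: "p * q = a {} * a {} + \<beta> * \<beta>" using flb[of 0] by (simp add: p_def q_def \<beta>_def)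
    have bp: "\<beta> > 0" "p > 0" "q > 0" using b0 by (auto simp: p_def q_def \<beta>_def)
    have "(p + q) * (p + q) - 4 * (p * q) = (p - q) * (p - q)" by (simp add: algebra_simps)
    then have "(p + q) * (p + q) \<ge> 4 * (p * q)" by (metis diff_ge_0_iff_ge zero_le_square)
    moreover have "a {} * a {} > 0" using a0 by simp
    ultimately have "(x0 * \<beta>) * (x0 * \<beta>) > 4 * (\<beta> * \<beta>)" using pq pq2 by simp
    then have "(x0 * x0) * (\<beta> * \<beta>) > 4 * (\<beta> * \<beta>)" by (simp add: mult_ac)
    then have xx: "x0 * x0 > 4" using bp by (simp add: mult_less_cancel_right)
    have "x0 * \<beta> > 0" using pq bp by simp
    then have xp: "x0 > 0" using bp by (simp add: zero_less_mult_iff)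
    show ?thesis
    proof (rule ccontr)
      assume "\<not> x0 > 2"
      then have "x0 * x0 \<le> 2 * 2" using xp by (intro mult_mono) auto
      then show False using xx by simp
    qed
  qed
  define s where "s = sqrt (x0 * x0 - 4)"
  have x4: "2 * 2 \<le> x0 * x0" using x0gt by (intro mult_mono) auto
  have s0: "s \<ge> 0" using x4 by (simp add: s_def)
  have ss: "s * s = x0 * x0 - 4"
    using x4 unfolding s_def by (simp add: real_sqrt_mult_self)
  have Rv: "R = (x0 + s) / 2"
    by (simp add: R_def r_def body_def gscale_def gadd_def body_gsqrt gsub_def gmul_empty gconst_def s_def x0_def)
  have R1: "R > 1" using Rv x0gt s0 by simp
  have Req: "R * R - x0 * R + 1 = 0"
  proof -
    have "R * R - x0 * R + 1 = (s * s - x0 * x0 + 4) / 4" unfolding Rv by (simp add: field_simps)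
    then show ?thesis using ss by simp
  qed
  have Rp1: "R ^ nat \<bar>i\<bar> \<ge> 1" for i using R1 by (simp add: one_le_power)
  define Ct where "Ct l = \<bar>t 0 l\<bar> + \<bar>t 1 l\<bar>" for l
  have tb: "\<bar>t i l\<bar> \<le> Ct l" for i l
  proof -
    have "t i = t (i mod 2)" by (rule period2) (rule tper)
    moreover have "i mod 2 = 0 \<or> i mod 2 = 1" by presburger
    ultimately show ?thesis unfolding Ct_def by auto
  qed
  have claim: "\<forall>l. card l = n \<longrightarrow> l \<subseteq> {1..N} \<longrightarrow>
      (\<exists>D. \<forall>i. \<bar>b i l\<bar> \<le> D * (real (nat \<bar>i\<bar>) + 1) ^ (card l div 2) * R ^ nat \<bar>i\<bar>)" for n
  proof (induction n rule: less_induct)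
    case (less n)
    show ?case
    proof (intro allI impI)
      fix l :: "nat set" assume cl: "card l = n" and lN: "l \<subseteq> {1..N}"
      have finl: "finite l" using lN by (rule finite_subset) simp
      show "\<exists>D. \<forall>i. \<bar>b i l\<bar> \<le> D * (real (nat \<bar>i\<bar>) + 1) ^ (card l div 2) * R ^ nat \<bar>i\<bar>"
      proof (cases "even (card l)")
        case False
        then have "b i l = 0" for i using b_even[of i] unfolding geven_def by auto
        then show ?thesis by (intro exI[of _ 0]) simp
      next
        case ev: True
        define f where "f i = (\<Sum>m\<in>Pow l - {{}}. gsign m (l - m) * x m * b i (l - m)) - t i l" for i
        have rl: "b (i+1) l - x0 * b i l + b (i-1) l = f i" for i
        proof -
          have "gmul x (b i) l = gsign {} (l - {}) * x {} * b i (l - {}) + (\<Sum>m\<in>Pow l - {{}}. gsign m (l - m) * x m * b i (l - m))"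
            unfolding gmul_def using finl by (intro sum.remove) auto
          then have "gmul x (b i) l = x0 * b i l + (\<Sum>m\<in>Pow l - {{}}. gsign m (l - m) * x m * b i (l - m))"
            by (simp add: x0_def)
          then show ?thesis using recl[of i l] by (simp add: f_def)
        qed
        show ?thesis
        proof (cases "card l = 0")
          case True
          then have l0: "l = {}" using finl by simp
          have fbd: "\<bar>f i\<bar> \<le> Ct l" for i using tb[of i l] by (simp add: f_def l0)
          obtain D where D: "\<forall>i. \<bar>b i l\<bar> \<le> D * R ^ nat \<bar>i\<bar>"
            using rec_cor0[of R x0 "\<lambda>i. b i l" f "Ct l", OF R1 Req rl fbd] by blast
          show ?thesis using D True by (intro exI[of _ D]) simp
        next
          case False
          define k' where "k' = card l div 2 - 1"
          have ck: "card l div 2 = Suc k'" using False ev unfolding k'_def by presburger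
          define Wt where "Wt i = (real (nat \<bar>i\<bar>) + 1) ^ k' * R ^ nat \<bar>i\<bar>" for i
          have Wt1: "Wt i \<ge> 1" for i
          proof -
            have "1 * 1 \<le> (real (nat \<bar>i\<bar>) + 1) ^ k' * R ^ nat \<bar>i\<bar>"
              using Rp1[of i] R1 by (intro mult_mono one_le_power) auto
            then show ?thesis by (simp add: Wt_def)
          qed
          have termb: "\<forall>m\<in>Pow l - {{}}. \<exists>Dm. \<forall>i. \<bar>gsign m (l - m) * x m * b i (l - m)\<bar> \<le> Dm * Wt i"
          proof
            fix m assume m: "m \<in> Pow l - {{}}"
            have ml: "m \<subseteq> l" "m \<noteq> {}" using m by auto
            have cs: "card l = card m + card (l - m)" using finl ml by (intro card_split) auto
            show "\<exists>Dm. \<forall>i. \<bar>gsign m (l - m) * x m * b i (l - m)\<bar> \<le> Dm * Wt i"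
            proof (cases "even (card m)")
              case False
              then have "odd (card (l - m))" using cs ev by simp
              then have "b i (l - m) = 0" for i using b_even[of i] unfolding geven_def by auto
              then show ?thesis by (intro exI[of _ 0]) simp
            next
              case True
              have "card m > 0" using ml finl by (meson card_gt_0_iff finite_subset)
              then have m2: "card m \<ge> 2" using True by presburger
              then have lt: "card (l - m) < n" using cs cl by simp
              have lmN: "l - m \<subseteq> {1..N}" using lN by auto
              obtain D' where D': "\<forall>i. \<bar>b i (l - m)\<bar> \<le> D' * (real (nat \<bar>i\<bar>) + 1) ^ (card (l - m) div 2) * R ^ nat \<bar>i\<bar>"
                using less.IH[OF lt] lmN by blast
              have ek: "card (l - m) div 2 \<le> k'" using cs m2 unfolding k'_def by presburger
              show ?thesis
              proof (intro exI[of _ "\<bar>x m\<bar> * \<bar>D'\<bar>"] allI)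
                fix i
                let ?w = "real (nat \<bar>i\<bar>) + 1"
                have pw: "?w ^ (card (l - m) div 2) \<le> ?w ^ k'" using ek by (intro power_increasing) auto
                have "\<bar>gsign m (l - m) * x m * b i (l - m)\<bar> = \<bar>gsign m (l - m)\<bar> * (\<bar>x m\<bar> * \<bar>b i (l - m)\<bar>)"
                  by (simp add: abs_mult)
                also have "\<dots> \<le> 1 * (\<bar>x m\<bar> * \<bar>b i (l - m)\<bar>)" by (intro mult_right_mono gsign_abs) simp
                also have "\<dots> \<le> \<bar>x m\<bar> * (D' * ?w ^ (card (l - m) div 2) * R ^ nat \<bar>i\<bar>)"
                  using D' by (simp add: mult_left_mono)
                also have "\<dots> \<le> \<bar>x m\<bar> * (\<bar>D'\<bar> * ?w ^ k' * R ^ nat \<bar>i\<bar>)"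
                proof (intro mult_left_mono)
                  have "D' * ?w ^ (card (l - m) div 2) * R ^ nat \<bar>i\<bar> \<le> \<bar>D'\<bar> * ?w ^ (card (l - m) div 2) * R ^ nat \<bar>i\<bar>"
                    using R1 by (intro mult_right_mono) auto
                  also have "\<dots> \<le> \<bar>D'\<bar> * ?w ^ k' * R ^ nat \<bar>i\<bar>"
                    using R1 pw by (intro mult_right_mono mult_left_mono) auto
                  finally show "D' * ?w ^ (card (l - m) div 2) * R ^ nat \<bar>i\<bar> \<le> \<bar>D'\<bar> * ?w ^ k' * R ^ nat \<bar>i\<bar>" .
                qed simp
                also have "\<dots> = \<bar>x m\<bar> * \<bar>D'\<bar> * Wt i" by (simp add: Wt_def mult_ac)
                finally show "\<bar>gsign m (l - m) * x m * b i (l - m)\<bar> \<le> \<bar>x m\<bar> * \<bar>D'\<bar> * Wt i" .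
              qed
            qed
          qed
          obtain Dm where Dm: "\<forall>m\<in>Pow l - {{}}. \<forall>i. \<bar>gsign m (l - m) * x m * b i (l - m)\<bar> \<le> Dm m * Wt i"
            using bchoice[OF termb] by blast
          define Cf where "Cf = (\<Sum>m\<in>Pow l - {{}}. Dm m) + Ct l"
          have fb: "\<bar>f i\<bar> \<le> Cf * (real (nat \<bar>i\<bar>) + 1) ^ k' * R ^ nat \<bar>i\<bar>" for i
          proof -
            have Ct0: "Ct l \<ge> 0" by (simp add: Ct_def)
            have "\<bar>f i\<bar> \<le> \<bar>\<Sum>m\<in>Pow l - {{}}. gsign m (l - m) * x m * b i (l - m)\<bar> + \<bar>t i l\<bar>"
              unfolding f_def by (rule abs_triangle_ineq4)
            also have "\<dots> \<le> (\<Sum>m\<in>Pow l - {{}}. \<bar>gsign m (l - m) * x m * b i (l - m)\<bar>) + Ct l"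
              using tb by (intro add_mono sum_abs) auto
            also have "\<dots> \<le> (\<Sum>m\<in>Pow l - {{}}. Dm m * Wt i) + Ct l * Wt i"
            proof (intro add_mono sum_mono)
              show "\<bar>gsign m (l - m) * x m * b i (l - m)\<bar> \<le> Dm m * Wt i" if "m \<in> Pow l - {{}}" for m
                using Dm that by blast
              show "Ct l \<le> Ct l * Wt i" using Ct0 Wt1[of i] by (metis mult_left_mono mult.right_neutral)
            qed
            also have "\<dots> = Cf * Wt i" by (simp add: Cf_def sum_distrib_right[symmetric] distrib_right)
            finally show ?thesis by (simp add: Wt_def mult.assoc)
          qed
          obtain D where "\<forall>i. \<bar>b i l\<bar> \<le> D * (real (nat \<bar>i\<bar>) + 1) ^ (k' + 1) * R ^ nat \<bar>i\<bar>"
            using rec_cork[of R x0 "\<lambda>i. b i l" f Cf k', OF R1 Req rl fb] by blast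
          then show ?thesis using ck by (intro exI[of _ D]) simp
        qed
      qed
    qed
  qed
  have bl: "\<forall>l\<in>Pow {1..N}. \<exists>D. \<forall>i. \<bar>b i l\<bar> \<le> D * (real (nat \<bar>i\<bar>) + 1) ^ (card l div 2) * R ^ nat \<bar>i\<bar>"
    using claim by blast
  obtain Db where Db: "\<forall>l\<in>Pow {1..N}. \<forall>i. \<bar>b i l\<bar> \<le> Db l * (real (nat \<bar>i\<bar>) + 1) ^ (card l div 2) * R ^ nat \<bar>i\<bar>"
    using bchoice[OF bl] by blast
  define DB where "DB = (\<Sum>l\<in>Pow {1..N}. \<bar>Db l\<bar>)"
  have DB0: "DB \<ge> 0" unfolding DB_def by (intro sum_nonneg) auto
  have R0: "R > 0" using R1 by simp
  have bB: "\<bar>b i l\<bar> \<le> DB * (real (nat \<bar>i\<bar>) + 1) ^ (card l div 2) * R ^ nat \<bar>i\<bar>" if l: "l \<subseteq> {1..N}" for i l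
  proof -
    let ?Y = "(real (nat \<bar>i\<bar>) + 1) ^ (card l div 2) * R ^ nat \<bar>i\<bar>"
    have Y0: "?Y \<ge> 0" using R0 by simp
    have "\<bar>Db l\<bar> \<le> DB" unfolding DB_def using l by (intro member_le_sum) auto
    then have "Db l \<le> DB" by simp
    then have m: "Db l * ?Y \<le> DB * ?Y" using Y0 by (rule mult_right_mono)
    have "\<bar>b i l\<bar> \<le> Db l * (real (nat \<bar>i\<bar>) + 1) ^ (card l div 2) * R ^ nat \<bar>i\<bar>" using Db l by blast
    also have "\<dots> = Db l * ?Y" by (simp only: mult.assoc)
    also have "\<dots> \<le> DB * ?Y" by (rule m)
    finally show ?thesis by (simp only: mult.assoc)
  qed
  have partb: "(\<lambda>i. gnorm N (s2k k (b i))) \<in> O[cofinite](\<lambda>i. real_of_int \<bar>i\<bar> ^ k * R ^ nat \<bar>i\<bar>)" for k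
  proof (rule bigo_cof)
    fix i :: int assume i0: "i \<noteq> 0"
    have gn0: "gnorm N y \<ge> 0" for y unfolding gnorm_def by (intro sum_nonneg) auto
    have "gnorm N (s2k k (b i)) \<le> 2 ^ N * (DB * (real (nat \<bar>i\<bar>) + 1) ^ k * R ^ nat \<bar>i\<bar>)"
    proof (rule s2k_bound)
      show "\<bar>b i l\<bar> \<le> DB * (real (nat \<bar>i\<bar>) + 1) ^ k * R ^ nat \<bar>i\<bar>" if "l \<subseteq> {1..N}" "card l = 2 * k" for l
        using bB[OF that(1), of i] that(2) by simp
      show "DB * (real (nat \<bar>i\<bar>) + 1) ^ k * R ^ nat \<bar>i\<bar> \<ge> 0" using DB0 R0 by simp
    qed
    also have "\<dots> \<le> 2 ^ N * (DB * (2 ^ k * real_of_int \<bar>i\<bar> ^ k) * R ^ nat \<bar>i\<bar>)"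
    proof -
      have "real (nat \<bar>i\<bar>) + 1 \<le> 2 * real_of_int \<bar>i\<bar>" using i0 by (simp add: of_nat_nat)
      then have "(real (nat \<bar>i\<bar>) + 1) ^ k \<le> (2 * real_of_int \<bar>i\<bar>) ^ k" by (intro power_mono) auto
      then have "(real (nat \<bar>i\<bar>) + 1) ^ k \<le> 2 ^ k * real_of_int \<bar>i\<bar> ^ k" by (simp add: power_mult_distrib)
      then show ?thesis using DB0 R0 by (intro mult_left_mono mult_right_mono) auto
    qed
    also have "\<dots> = (2 ^ N * DB * 2 ^ k) * \<bar>real_of_int \<bar>i\<bar> ^ k * R ^ nat \<bar>i\<bar>\<bar>"
      using R0 by (simp add: abs_mult mult_ac)
    finally show "\<bar>gnorm N (s2k k (b i))\<bar> \<le> (2 ^ N * DB * 2 ^ k) * \<bar>real_of_int \<bar>i\<bar> ^ k * R ^ nat \<bar>i\<bar>\<bar>"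
      using gn0 by simp
  qed
  have iA: "rep A \<in> RS N" using aRS by simp
  have iA2: "rep A {} \<noteq> 0" using a0 by simp
  obtain IA where IA: "A * IA = 1" using inv[OF iA iA2] by blast
  define ia where "ia = rep IA"
  have cform: "c i = gmul ia (gadd (gadd (gmul (b i) (b i)) (gmul (b (i+1)) (b (i+1)))) (gmul (gmul (b i) (b (i+1))) Wa))" for i
  proof -
    have Wai: "Wof (mu i) (oa i) = Wa" using Wa_const[of i] by (simp only: Wa_def)
    have ac: "A * CC i = B i * B i + B (i+1) * B (i+1) + B i * B (i+1) * WA"
      by (rule rep_eqI) (simp add: rep_times rep_plus flip_a flip_rhs_def Wai)
    have "CC i = (A * IA) * CC i" using IA by simp
    also have "\<dots> = IA * (A * CC i)" by (simp add: mult_ac)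
    also have "\<dots> = IA * (B i * B i + B (i+1) * B (i+1) + B i * B (i+1) * WA)" by (simp only: ac)
    finally have "CC i = IA * (B i * B i + B (i+1) * B (i+1) + B i * B (i+1) * WA)" .
    then have "rep (CC i) = rep (IA * (B i * B i + B (i+1) * B (i+1) + B i * B (i+1) * WA))" by simp
    then show ?thesis by (simp add: rep_times rep_plus ia_def)
  qed
  define MW where "MW = (\<Sum>l\<in>Pow {1..N}. \<bar>Wa l\<bar>)"
  define MI where "MI = (\<Sum>l\<in>Pow {1..N}. \<bar>ia l\<bar>)"
  have MW0: "MW \<ge> 0" unfolding MW_def by (intro sum_nonneg) auto
  have MI0: "MI \<ge> 0" unfolding MI_def by (intro sum_nonneg) auto
  define K1 where "K1 = 2 ^ N * DB * DB"
  define K2 where "K2 = 2 ^ N * (DB * R) * (DB * R)"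
  define K3 where "K3 = 2 ^ N * (2 ^ N * DB * (DB * R)) * MW"
  define KC where "KC = 2 ^ N * MI * (K1 + K2 + K3)"
  have KC0: "KC \<ge> 0" using DB0 R0 MW0 MI0 by (simp add: KC_def K1_def K2_def K3_def)
  have cB: "Bd N (c i) KC (2 * (real (nat \<bar>i\<bar>) + 1)) (R ^ nat \<bar>i\<bar> * R ^ nat \<bar>i\<bar>)" for i
  proof -
    define P where "P = 2 * (real (nat \<bar>i\<bar>) + 1)"
    define Q where "Q = R ^ nat \<bar>i\<bar>"
    have P1: "P \<ge> 1" by (simp add: P_def)
    have Q0: "Q \<ge> 0" using R0 by (simp add: Q_def)
    have Bb: "Bd N (b i) DB P Q" unfolding Bd_def
    proof (intro allI impI)
      fix l :: "nat set" assume l: "l \<subseteq> {1..N}"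
      let ?w = "real (nat \<bar>i\<bar>) + 1"
      have "?w ^ (card l div 2) \<le> ?w ^ card l" by (intro power_increasing) auto
      also have "\<dots> \<le> P ^ card l" unfolding P_def by (intro power_mono) auto
      finally have wp: "?w ^ (card l div 2) \<le> P ^ card l" .
      have "\<bar>b i l\<bar> \<le> DB * ?w ^ (card l div 2) * Q" using bB[OF l, of i] by (simp add: Q_def)
      also have "\<dots> \<le> DB * P ^ card l * Q" using wp DB0 Q0 by (intro mult_right_mono mult_left_mono) auto
      finally show "\<bar>b i l\<bar> \<le> DB * P ^ card l * Q" .
    qed
    have Bb1: "Bd N (b (i+1)) (DB * R) P Q" unfolding Bd_def
    proof (intro allI impI)
      fix l :: "nat set" assume l: "l \<subseteq> {1..N}"
      let ?w = "real (nat \<bar>i+1\<bar>) + 1"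
      have "nat \<bar>i+1\<bar> \<le> nat \<bar>i\<bar> + 1" by arith
      then have "real (nat \<bar>i+1\<bar>) \<le> real (nat \<bar>i\<bar>) + 1" by linarith
      moreover have "real (nat \<bar>i\<bar>) \<ge> 0" by simp
      moreover have aux: "u + 1 \<le> 2 * (v + 1)" if "u \<le> v + 1" "0 \<le> v" for u v :: real
        using that by (simp add: algebra_simps)
      ultimately have "?w \<le> P" unfolding P_def by blast
      then have "?w ^ (card l div 2) \<le> P ^ (card l div 2)" by (intro power_mono) auto
      also have "\<dots> \<le> P ^ card l" using P1 by (intro power_increasing) auto
      finally have wp: "?w ^ (card l div 2) \<le> P ^ card l" .
      have "R ^ nat \<bar>i+1\<bar> \<le> R ^ (Suc (nat \<bar>i\<bar>))" using R1 by (intro power_increasing) auto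
      then have rp: "R ^ nat \<bar>i+1\<bar> \<le> R * Q" by (simp add: Q_def)
      have "\<bar>b (i+1) l\<bar> \<le> DB * ?w ^ (card l div 2) * R ^ nat \<bar>i+1\<bar>" using bB[OF l, of "i+1"] by simp
      also have "\<dots> \<le> DB * P ^ card l * (R * Q)"
        using wp DB0 rp R0 P1 by (intro mult_mono mult_left_mono) auto
      also have "\<dots> = DB * R * P ^ card l * Q" by (simp add: mult_ac)
      finally show "\<bar>b (i+1) l\<bar> \<le> DB * R * P ^ card l * Q" .
    qed
    have BW: "Bd N Wa MW P 1" unfolding MW_def by (rule Bd_const[OF P1])
    have BI: "Bd N ia MI P 1" unfolding MI_def by (rule Bd_const[OF P1])
    have T1: "Bd N (gmul (b i) (b i)) K1 P (Q * Q)"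
      unfolding K1_def by (rule Bd_mul[OF Bb Bb]) (use DB0 P1 Q0 in auto)
    have T2: "Bd N (gmul (b (i+1)) (b (i+1))) K2 P (Q * Q)"
      unfolding K2_def by (rule Bd_mul[OF Bb1 Bb1]) (use DB0 R0 P1 Q0 in auto)
    have T3a: "Bd N (gmul (b i) (b (i+1))) (2 ^ N * DB * (DB * R)) P (Q * Q)"
      by (rule Bd_mul[OF Bb Bb1]) (use DB0 R0 P1 Q0 in auto)
    have T3: "Bd N (gmul (gmul (b i) (b (i+1))) Wa) K3 P (Q * Q * 1)"
      unfolding K3_def by (rule Bd_mul[OF T3a BW]) (use DB0 R0 P1 Q0 MW0 in auto)
    have T: "Bd N (gadd (gadd (gmul (b i) (b i)) (gmul (b (i+1)) (b (i+1)))) (gmul (gmul (b i) (b (i+1))) Wa)) (K1 + K2 + K3) P (Q * Q)"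
      by (rule Bd_add[OF Bd_add[OF T1 T2]]) (use T3 in simp)
    have "Bd N (c i) (2 ^ N * MI * (K1 + K2 + K3)) P (1 * (Q * Q))"
      unfolding cform by (rule Bd_mul[OF BI T]) (use DB0 R0 P1 Q0 MI0 MW0 in \<open>auto simp: K1_def K2_def K3_def\<close>)
    then show ?thesis by (simp add: KC_def P_def Q_def)
  qed
  have partc: "(\<lambda>i. gnorm N (s2k k (c i))) \<in> O[cofinite](\<lambda>i. real_of_int \<bar>i\<bar> ^ (2 * k) * R ^ (2 * nat \<bar>i\<bar>))" for k
  proof (rule bigo_cof)
    fix i :: int assume i0: "i \<noteq> 0"
    have gn0: "gnorm N y \<ge> 0" for y unfolding gnorm_def by (intro sum_nonneg) auto
    let ?P = "2 * (real (nat \<bar>i\<bar>) + 1)"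
    have RR: "R ^ nat \<bar>i\<bar> * R ^ nat \<bar>i\<bar> = R ^ (2 * nat \<bar>i\<bar>)" by (simp add: power_add[symmetric] mult_2)
    have "gnorm N (s2k k (c i)) \<le> 2 ^ N * (KC * ?P ^ (2 * k) * R ^ (2 * nat \<bar>i\<bar>))"
    proof (rule s2k_bound)
      show "\<bar>c i l\<bar> \<le> KC * ?P ^ (2 * k) * R ^ (2 * nat \<bar>i\<bar>)" if "l \<subseteq> {1..N}" "card l = 2 * k" for l
        using cB[of i] that unfolding Bd_def RR by auto
      show "KC * ?P ^ (2 * k) * R ^ (2 * nat \<bar>i\<bar>) \<ge> 0" using KC0 R0 by simp
    qed
    also have "\<dots> \<le> 2 ^ N * (KC * (4 ^ (2 * k) * real_of_int \<bar>i\<bar> ^ (2 * k)) * R ^ (2 * nat \<bar>i\<bar>))"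
    proof -
      have "?P \<le> 4 * real_of_int \<bar>i\<bar>" using i0 by (simp add: of_nat_nat)
      then have "?P ^ (2 * k) \<le> (4 * real_of_int \<bar>i\<bar>) ^ (2 * k)" by (intro power_mono) auto
      then have "?P ^ (2 * k) \<le> 4 ^ (2 * k) * real_of_int \<bar>i\<bar> ^ (2 * k)" by (simp add: power_mult_distrib)
      then show ?thesis using KC0 R0 by (intro mult_left_mono mult_right_mono) auto
    qed
    also have "\<dots> = (2 ^ N * KC * 4 ^ (2 * k)) * \<bar>real_of_int \<bar>i\<bar> ^ (2 * k) * R ^ (2 * nat \<bar>i\<bar>)\<bar>"
      using R0 by (simp add: abs_mult mult_ac)
    finally show "\<bar>gnorm N (s2k k (c i))\<bar> \<le> (2 ^ N * KC * 4 ^ (2 * k)) * \<bar>real_of_int \<bar>i\<bar> ^ (2 * k) * R ^ (2 * nat \<bar>i\<bar>)\<bar>"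
      using gn0 by simp
  qed
  have main: "\<forall>k::nat.
              (\<lambda>i. gnorm N (s2k k (b i))) \<in> O[cofinite](\<lambda>i. real_of_int \<bar>i\<bar> ^ k * R ^ nat \<bar>i\<bar>)
            \<and> (\<lambda>i. gnorm N (s2k k (c i))) \<in> O[cofinite](\<lambda>i. real_of_int \<bar>i\<bar> ^ (2 * k) * R ^ (2 * nat \<bar>i\<bar>))"
    using partb partc by blast
  show ?thesis
    unfolding Let_def Wa_def[symmetric] x_def[symmetric] r_def[symmetric] R_def[symmetric]
    by (rule main)
qed

end
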